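(* Assume $k(c)>0$ for all $c\in[0,1]$. Then the function $F$ is a classical solution of $$\max\big\{-\mathbb L_XF(x,c)+\lambda F(x,c)-\lambda x\Phi(c),\;-F_c(x,c)-x\big\}=0\quad\text{for all }(x,c)\in\mathbb R\times[0,1].$$
   Context: Fix $\theta,\sigma,\mu,\lambda>0$; $\mathbb L_Xf(x):=\frac12\sigma^2f''(x)+\theta(\mu-x)f'(x)$ (acting in the $x$-variable). $\Phi\in C^2(\mathbb R)$ is nonincreasing and strictly convex with $\Phi(1)=0$; $k(c):=\lambda+\theta+\lambda\Phi'(c)$; $G(x;c):=\frac{\mu(k(c)-\theta)}{\lambda}+\frac{k(c)(x-\mu)}{\lambda+\theta}$. $\phi_\lambda(x):=e^{\frac{\theta(x-\mu)^2}{2\sigma^2}}D_{-\lambda/\theta}\big(\frac{(x-\mu)\sqrt{2\theta}}{\sigma}\big)$ with $D_\alpha(z)=\frac{e^{-z^2/4}}{\Gamma(-\alpha)}\int_0^\infty t^{-\alpha-1}e^{-t^2/2-zt}dt$; it is the positive strictly decreasing solution of $\mathbb L_Xf=\lambda f$. For $c\in[0,1]$, $\beta_*(c)$ is the unique real solution of $G_x(x;c)\phi_\lambda(x)-G(x;c)\phi_\lambda'(x)=0$; $u(x;c):=G(x;c)-\frac{G(\beta_*(c);c)}{\phi_\lambda(\beta_*(c))}\phi_\lambda(x)$ for $x>\beta_*(c)$ and $u(x;c):=0$ otherwise; $F(x,c):=x(1-c)-\int_c^1u(x;y)\,dy$. *)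

theory Defs
  imports "HOL-Analysis.Analysis"
begin

definition strictly_convex :: "(real \<Rightarrow> real) \<Rightarrow> bool" where
  "strictly_convex f \<longleftrightarrow>
     (\<forall>x y t. x \<noteq> y \<longrightarrow> 0 < t \<longrightarrow> t < 1 \<longrightarrow>
        f ((1 - t) * x + t * y) < (1 - t) * f x + t * f y)"

text \<open>Parabolic cylinder function D_alpha (integral representation, alpha < 0).\<close>
definition pcD :: "real \<Rightarrow> real \<Rightarrow> real" where
  "pcD \<alpha> z = exp (- z\<^sup>2 / 4) / Gamma (- \<alpha>) *
      (LBINT t:{0<..}. t powr (- \<alpha> - 1) * exp (- t\<^sup>2 / 2 - z * t))"

definition phiL :: "real \<Rightarrow> real \<Rightarrow> real \<Rightarrow> real \<Rightarrow> real \<Rightarrow> real" where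
  "phiL \<theta> \<sigma> \<mu> lam x =
     exp (\<theta> * (x - \<mu>)\<^sup>2 / (2 * \<sigma>\<^sup>2)) * pcD (- lam / \<theta>) ((x - \<mu>) * sqrt (2 * \<theta>) / \<sigma>)"

definition kfun :: "real \<Rightarrow> real \<Rightarrow> (real \<Rightarrow> real) \<Rightarrow> real \<Rightarrow> real" where
  "kfun \<theta> lam \<Phi> c = lam + \<theta> + lam * deriv \<Phi> c"

definition Gfun :: "real \<Rightarrow> real \<Rightarrow> real \<Rightarrow> (real \<Rightarrow> real) \<Rightarrow> real \<Rightarrow> real \<Rightarrow> real" where
  "Gfun \<theta> \<mu> lam \<Phi> x c =
     \<mu> * (kfun \<theta> lam \<Phi> c - \<theta>) / lam + kfun \<theta> lam \<Phi> c * (x - \<mu>) / (lam + \<theta>)"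

definition betaStar :: "real \<Rightarrow> real \<Rightarrow> real \<Rightarrow> real \<Rightarrow> (real \<Rightarrow> real) \<Rightarrow> real \<Rightarrow> real" where
  "betaStar \<theta> \<sigma> \<mu> lam \<Phi> c =
     (THE b. deriv (\<lambda>x. Gfun \<theta> \<mu> lam \<Phi> x c) b * phiL \<theta> \<sigma> \<mu> lam b
             - Gfun \<theta> \<mu> lam \<Phi> b c * deriv (phiL \<theta> \<sigma> \<mu> lam) b = 0)"

definition ufun :: "real \<Rightarrow> real \<Rightarrow> real \<Rightarrow> real \<Rightarrow> (real \<Rightarrow> real) \<Rightarrow> real \<Rightarrow> real \<Rightarrow> real" where
  "ufun \<theta> \<sigma> \<mu> lam \<Phi> x c =
     (let b = betaStar \<theta> \<sigma> \<mu> lam \<Phi> c in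
      if x > b then Gfun \<theta> \<mu> lam \<Phi> x c
                    - Gfun \<theta> \<mu> lam \<Phi> b c / phiL \<theta> \<sigma> \<mu> lam b * phiL \<theta> \<sigma> \<mu> lam x
      else 0)"

definition Ffun :: "real \<Rightarrow> real \<Rightarrow> real \<Rightarrow> real \<Rightarrow> (real \<Rightarrow> real) \<Rightarrow> real \<Rightarrow> real \<Rightarrow> real" where
  "Ffun \<theta> \<sigma> \<mu> lam \<Phi> x c =
     x * (1 - c) - integral {c..1} (\<lambda>y. ufun \<theta> \<sigma> \<mu> lam \<Phi> x y)"

end

theory Submission
  imports Defs "HOL-Real_Asymp.Real_Asymp"
begin

definition Psi :: "real \<Rightarrow> real \<Rightarrow> real" where
  "Psi p z = (LBINT t:{0<..}. t powr p * exp (- t\<^sup>2 / 2 - z * t))"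

lemma gamma_integrable:
  assumes "p > -1"
  shows "set_integrable lborel {0<..} (\<lambda>t::real. t powr p / exp t)"
proof -
  have "((\<lambda>t. t powr (p + 1 - 1) / exp t) has_integral Gamma (p+1)) {0..}"
    by (rule Gamma_integral_real) (use assms in auto)
  hence "(\<lambda>t. t powr p / exp t) integrable_on {0..}" by (auto simp: has_integral_iff)
  hence "(\<lambda>t. t powr p / exp t) absolutely_integrable_on {0..}"
    by (intro nonnegative_absolutely_integrable_1) auto
  hence "(\<lambda>t. t powr p / exp t) absolutely_integrable_on {0<..}"
    by (rule set_integrable_subset) auto
  hence "integrable lebesgue (\<lambda>t. indicator {0<..} t *\<^sub>R (t powr p / exp t))"
    by (simp add: set_integrable_def)
  hence "integrable lborel (\<lambda>t. indicator {0<..} t *\<^sub>R (t powr p / exp t))"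
    by (subst (asm) integrable_completion)
       (auto intro!: borel_measurable_continuous_on_indicator continuous_intros)
  thus ?thesis by (simp add: set_integrable_def)
qed

lemma Psi_integrable:
  assumes "p > -1"
  shows "set_integrable lborel {0<..} (\<lambda>t::real. t powr p * exp (- t\<^sup>2 / 2 - z * t))"
proof -
  have "set_integrable lborel {0<..} (\<lambda>t::real. exp ((z-1)\<^sup>2/2) * (t powr p / exp t))"
    using gamma_integrable[OF assms] by (rule set_integrable_mult_right)
  thus ?thesis
  proof (rule set_integrable_bound)
    show "set_borel_measurable lborel {0<..} (\<lambda>t::real. t powr p * exp (- t\<^sup>2 / 2 - z * t))"
      unfolding set_borel_measurable_def measurable_lborel2
      by (intro borel_measurable_continuous_on_indicator) (auto intro!: continuous_intros)
    show "AE t in lborel. t \<in> {0<..} \<longrightarrow> norm (t powr p * exp (- t\<^sup>2 / 2 - z * t))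
        \<le> norm (exp ((z-1)\<^sup>2/2) * (t powr p / exp t))"
    proof (intro AE_I2 impI)
      fix t :: real assume "t \<in> {0<..}"
      have "- t\<^sup>2 / 2 - z * t \<le> (z-1)\<^sup>2/2 + (- t)"
        using sum_squares_ge_zero[of "t + z - 1" 0] by (simp add: power2_eq_square algebra_simps)
      hence "exp (- t\<^sup>2 / 2 - z * t) \<le> exp ((z-1)\<^sup>2/2) / exp t"
        by (simp add: exp_add[symmetric] exp_diff[symmetric] del: exp_add)
      thus "norm (t powr p * exp (- t\<^sup>2 / 2 - z * t)) \<le> norm (exp ((z-1)\<^sup>2/2) * (t powr p / exp t))"
      proof -
        have "t powr p * exp (- t\<^sup>2 / 2 - z * t) \<le> t powr p * (exp ((z-1)\<^sup>2/2) / exp t)"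
          by (rule mult_left_mono) (use \<open>exp (- t\<^sup>2 / 2 - z * t) \<le> _\<close> in auto)
        thus ?thesis by (simp add: abs_mult mult_ac)
      qed
    qed
  qed
qed

lemma set_integral_pos_Ioi:
  fixes f :: "real \<Rightarrow> real"
  assumes int: "set_integrable lborel {0<..} f" and pos: "\<And>t. t > 0 \<Longrightarrow> f t > 0"
  shows "(LBINT t:{0<..}. f t) > 0"
proof -
  have nn: "AE t in lborel. 0 \<le> indicator {0<..} t *\<^sub>R f t"
    using pos by (intro AE_I2) (auto simp: indicator_def less_imp_le)
  have ge: "(LBINT t:{0<..}. f t) \<ge> 0"
    unfolding set_lebesgue_integral_def using nn by (intro integral_nonneg_AE) auto
  have "(LBINT t:{0<..}. f t) \<noteq> 0"
  proof
    assume "(LBINT t:{0<..}. f t) = 0"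
    hence "AE t in lborel. indicator {0<..} t *\<^sub>R f t = 0"
      using integral_nonneg_eq_0_iff_AE[OF int[unfolded set_integrable_def] nn]
      by (simp add: set_lebesgue_integral_def)
    moreover have "AE t in lborel. indicat_real {0<..} t *\<^sub>R f t = 0 \<longrightarrow> t \<notin> {0<..}"
        using pos by (intro AE_I2) (force simp: indicator_def)
    ultimately have "AE t in lborel. (t::real) \<notin> {0<..}" by eventually_elim blast
    hence "{0::real<..} \<in> null_sets lborel"
      by (subst AE_iff_null_sets) auto
    hence "{0<..(1::real)} \<in> null_sets lborel"
      by (rule null_sets_subset) auto
    hence "emeasure lborel {0<..(1::real)} = 0" by auto
    thus False by simp
  qed
  with ge show ?thesis by simp
qed

lemma Psi_pos: "p > -1 \<Longrightarrow> Psi p z > 0"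
  unfolding Psi_def by (rule set_integral_pos_Ioi[OF Psi_integrable]) auto

lemma exp_taylor_bound: "\<bar>exp s - 1 - s\<bar> \<le> s\<^sup>2 * exp \<bar>s::real\<bar>"
proof -
  obtain t where t: "\<bar>t\<bar> \<le> \<bar>s\<bar>" "exp s = (\<Sum>m<2. s ^ m / fact m) + exp t / fact 2 * s ^ 2"
    using Maclaurin_exp_le[of s 2] by blast
  have sum: "(\<Sum>m<2. s ^ m / fact m) = 1 + s" by (simp add: numeral_2_eq_2)
  have e: "exp s - 1 - s = exp t / 2 * s\<^sup>2" using t(2) unfolding sum by simp
  have "exp t \<le> exp \<bar>s\<bar>" using t(1) by simp
  have "\<bar>exp s - 1 - s\<bar> = exp t / 2 * s\<^sup>2" unfolding e by simp
  also have "\<dots> \<le> exp \<bar>s\<bar> * s\<^sup>2"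
    by (rule mult_right_mono) (use \<open>exp t \<le> exp \<bar>s\<bar>\<close> exp_gt_zero[of t] in linarith, simp)
  finally have "\<bar>exp s - 1 - s\<bar> \<le> exp \<bar>s\<bar> * s\<^sup>2" .
  thus ?thesis by (simp add: mult.commute)
qed

lemma deriv_from_quadratic_bound:
  fixes f :: "real \<Rightarrow> real"
  assumes "\<And>z. \<bar>z - z0\<bar> \<le> 1 \<Longrightarrow> \<bar>f z - f z0 - D * (z - z0)\<bar> \<le> C * (z - z0)\<^sup>2"
  shows "(f has_real_derivative D) (at z0)"
proof -
  have lim: "((\<lambda>z. C * \<bar>z - z0\<bar>) \<longlongrightarrow> C * \<bar>z0 - z0\<bar>) (at z0)"
    by (intro tendsto_intros)
  have ev: "\<forall>\<^sub>F z in at z0. dist ((f z - f z0) / (z - z0)) D \<le> dist (C * \<bar>z - z0\<bar>) 0"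
  proof -
    have "\<forall>\<^sub>F z in at z0. z \<in> ball z0 1 \<and> z \<noteq> z0"
      by (intro eventually_conj eventually_at_in_open') (auto simp: eventually_at_filter)
    thus ?thesis
    proof eventually_elim
      case (elim z)
      hence z: "\<bar>z - z0\<bar> \<le> 1" "z \<noteq> z0" by (auto simp: dist_real_def)
      have "(f z - f z0) / (z - z0) - D = (f z - f z0 - D * (z - z0)) / (z - z0)"
        using z by (simp add: field_simps)
      hence "\<bar>(f z - f z0) / (z - z0) - D\<bar> = \<bar>f z - f z0 - D * (z - z0)\<bar> / \<bar>z - z0\<bar>"
        by (simp add: abs_divide)
      also have "\<dots> \<le> C * (z - z0)\<^sup>2 / \<bar>z - z0\<bar>"
        by (rule divide_right_mono[OF assms[OF z(1)]]) auto
      also have "C * (z - z0)\<^sup>2 / \<bar>z - z0\<bar> = C * \<bar>z - z0\<bar>"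
      proof -
        show ?thesis using z by (simp add: field_simps power2_eq_square)
      qed
      finally have "\<bar>(f z - f z0) / (z - z0) - D\<bar> \<le> C * \<bar>z - z0\<bar>" .
      thus ?case by (simp add: dist_real_def)
    qed
  qed
  have "((\<lambda>z. (f z - f z0) / (z - z0)) \<longlongrightarrow> D) (at z0)"
    by (rule metric_tendsto_imp_tendsto[OF _ ev]) (use lim in simp)
  thus ?thesis by (simp add: has_field_derivative_iff)
qed

lemma Psi_deriv:
  assumes p: "p > -1"
  shows "(Psi p has_real_derivative - Psi (p+1) z0) (at z0)"
proof (rule deriv_from_quadratic_bound[where C = "Psi (p+2) (z0 - 1)"])
  fix z assume zz: "\<bar>z - z0\<bar> \<le> 1"
  define g where "g t = t powr p * exp (- t\<^sup>2 / 2 - z * t) - t powr p * exp (- t\<^sup>2 / 2 - z0 * t)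
      + (z - z0) * (t powr (p+1) * exp (- t\<^sup>2 / 2 - z0 * t))" for t :: real
  define h where "h t = (z - z0)\<^sup>2 * (t powr (p+2) * exp (- t\<^sup>2 / 2 - (z0 - 1) * t))" for t :: real
  have i1: "set_integrable lborel {0<..} (\<lambda>t::real. t powr p * exp (- t\<^sup>2 / 2 - z * t))"
    "set_integrable lborel {0<..} (\<lambda>t::real. t powr p * exp (- t\<^sup>2 / 2 - z0 * t))"
    "set_integrable lborel {0<..} (\<lambda>t::real. t powr (p+1) * exp (- t\<^sup>2 / 2 - z0 * t))"
    "set_integrable lborel {0<..} (\<lambda>t::real. t powr (p+2) * exp (- t\<^sup>2 / 2 - (z0 - 1) * t))"
    by (rule Psi_integrable; use p in simp)+
  have gi: "set_integrable lborel {0<..} g"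
    unfolding g_def using i1 by (intro set_integral_add set_integral_diff set_integrable_mult_right) auto
  have hi: "set_integrable lborel {0<..} h"
    unfolding h_def using i1 by (intro set_integrable_mult_right) auto
  have eq: "Psi p z - Psi p z0 - (- Psi (p + 1) z0) * (z - z0) = (LBINT t:{0<..}. g t)"
    unfolding g_def Psi_def using i1
    by (subst set_integral_add set_integral_diff set_integral_mult_right, (auto intro!: set_integral_diff set_integrable_mult_right)[2])+
       (simp add: algebra_simps)
  have hv: "(LBINT t:{0<..}. h t) = (z - z0)\<^sup>2 * Psi (p+2) (z0 - 1)"
    unfolding h_def Psi_def by (simp add: set_integral_mult_right)
  have pw: "norm (g t) \<le> h t" if t: "t \<in> {0<..}" for t
  proof -
    define s where "s = - (z - z0) * t"
    define E0 where "E0 = exp (- t\<^sup>2 / 2 - z0 * t)"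
    have tp: "t > 0" using t by simp
    have e1: "exp (- t\<^sup>2 / 2 - z * t) = E0 * exp s"
      unfolding E0_def s_def by (simp add: exp_add[symmetric] algebra_simps)
    have p1: "t powr (p+1) = t powr p * t" using tp by (simp add: powr_add)
    have p2: "t powr (p+2) = t powr p * t\<^sup>2" using tp by (simp add: powr_add power2_eq_square)
    have gq: "g t = t powr p * E0 * (exp s - 1 - s)"
      unfolding g_def e1 p1 by (simp add: E0_def s_def algebra_simps)
    have "\<bar>exp s - 1 - s\<bar> \<le> s\<^sup>2 * exp \<bar>s\<bar>" by (rule exp_taylor_bound)
    also have "\<dots> \<le> ((z - z0)\<^sup>2 * t\<^sup>2) * exp t"
    proof (rule mult_mono)
      show "s\<^sup>2 \<le> (z - z0)\<^sup>2 * t\<^sup>2" by (simp add: s_def power_mult_distrib power2_commute)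
      have "\<bar>s\<bar> \<le> t" unfolding s_def using zz tp
        by (simp add: abs_mult mult_le_cancel_right1 abs_minus_commute)
      thus "exp \<bar>s\<bar> \<le> exp t" by simp
    qed auto
    finally have b: "\<bar>exp s - 1 - s\<bar> \<le> (z - z0)\<^sup>2 * t\<^sup>2 * exp t" .
    have "norm (g t) = t powr p * E0 * \<bar>exp s - 1 - s\<bar>"
      unfolding gq using tp by (simp add: abs_mult E0_def)
    also have "\<dots> \<le> t powr p * E0 * ((z - z0)\<^sup>2 * t\<^sup>2 * exp t)"
      by (rule mult_left_mono[OF b]) (simp add: E0_def)
    also have "\<dots> = h t"
      unfolding h_def p2 E0_def by (simp add: algebra_simps exp_add[symmetric])
    finally show ?thesis .
  qed
  have "\<bar>LBINT t:{0<..}. g t\<bar> \<le> (LBINT t:{0<..}. h t)"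
  proof -
    have "norm (LBINT t:{0<..}. g t) \<le> (LBINT t:{0<..}. norm (g t))"
      by (rule set_integral_norm_bound[OF gi])
    also have "\<dots> \<le> (LBINT t:{0<..}. h t)"
      by (rule set_integral_mono[OF _ hi]) (use set_integrable_norm[OF gi] pw in auto)
    finally show ?thesis by simp
  qed
  thus "\<bar>Psi p z - Psi p z0 - - Psi (p + 1) z0 * (z - z0)\<bar> \<le> Psi (p + 2) (z0 - 1) * (z - z0)\<^sup>2"
    unfolding eq hv by (simp add: mult.commute)
qed

lemma Psi_ode:
  assumes a: "a > 0"
  shows "a * Psi (a-1) z - Psi (a+1) z - z * Psi a z = 0"
proof -
  define F where "F t = t powr a * exp (- t\<^sup>2 / 2 - z * t)" for t :: real
  define f where "f t = a * (t powr (a-1) * exp (- t\<^sup>2 / 2 - z * t)) - t powr (a+1) * exp (- t\<^sup>2 / 2 - z * t)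
     - z * (t powr a * exp (- t\<^sup>2 / 2 - z * t))" for t :: real
  have i1: "set_integrable lborel {0<..} (\<lambda>t::real. t powr (a-1) * exp (- t\<^sup>2 / 2 - z * t))"
    "set_integrable lborel {0<..} (\<lambda>t::real. t powr (a+1) * exp (- t\<^sup>2 / 2 - z * t))"
    "set_integrable lborel {0<..} (\<lambda>t::real. t powr a * exp (- t\<^sup>2 / 2 - z * t))"
    by (rule Psi_integrable; use a in simp)+
  have ein: "einterval (ereal 0) \<infinity> = {0<..}" by (auto simp: einterval_def)
  have fi: "set_integrable lborel {0<..} f"
    unfolding f_def using i1 by (intro set_integral_diff set_integrable_mult_right) auto
  have "(LBINT t=ereal 0..\<infinity>. f t) = 0 - 0"
  proof (rule interval_integral_FTC_integrable[where F = F])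
    fix t :: real assume "ereal 0 < ereal t" "ereal t < \<infinity>"
    hence tp: "t > 0" by simp
    have "(F has_real_derivative (a * t powr (a - 1) * exp (- t\<^sup>2 / 2 - z * t)
          + t powr a * (exp (- t\<^sup>2 / 2 - z * t) * (- (2 * t) / 2 - z)))) (at t)"
      unfolding F_def using tp by (auto intro!: derivative_eq_intros)
    moreover have "a * t powr (a - 1) * exp (- t\<^sup>2 / 2 - z * t)
          + t powr a * (exp (- t\<^sup>2 / 2 - z * t) * (- (2 * t) / 2 - z)) = f t"
    proof -
      have "t powr (a+1) = t powr a * t" using tp by (simp add: powr_add)
      thus ?thesis unfolding f_def by (simp add: algebra_simps)
    qed
    ultimately show "(F has_vector_derivative f t) (at t)"
      by (simp add: has_real_derivative_iff_has_vector_derivative)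
    show "isCont f t" unfolding f_def using tp by (auto intro!: continuous_intros)
  next
    show "set_integrable lborel (einterval (ereal 0) \<infinity>) f" unfolding ein by (rule fi)
    show "((F \<circ> real_of_ereal) \<longlongrightarrow> 0) (at_right (ereal 0))"
      unfolding ereal_tendsto_simps F_def using a by real_asymp
    show "((F \<circ> real_of_ereal) \<longlongrightarrow> 0) (at_left \<infinity>)"
      unfolding ereal_tendsto_simps F_def by real_asymp
  qed simp
  hence "(LBINT t:{0<..}. f t) = 0" by (simp add: interval_integral_to_infinity_eq)
  moreover have "(LBINT t:{0<..}. f t) = a * Psi (a-1) z - Psi (a+1) z - z * Psi a z"
    unfolding f_def Psi_def using i1
    by (subst set_integral_diff set_integral_mult_right, (auto intro!: set_integral_diff set_integrable_mult_right)[2])+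
       simp
  ultimately show ?thesis by simp
qed


locale ou =
  fixes \<theta> \<sigma> \<mu> lam :: real
  assumes th: "\<theta> > 0" and sg: "\<sigma> > 0" and mu: "\<mu> > 0" and lam: "lam > 0"
begin

definition "a = lam / \<theta>"
definition "c0 = sqrt (2 * \<theta>) / \<sigma>"
definition "K = 1 / Gamma a"
abbreviation "phi \<equiv> phiL \<theta> \<sigma> \<mu> lam"
definition "phi1 x = - K * c0 * Psi a (c0 * (x - \<mu>))"
definition "phi2 x = K * c0\<^sup>2 * Psi (a+1) (c0 * (x - \<mu>))"

lemma a_pos: "a > 0" using th lam by (simp add: a_def)
lemma c0_pos: "c0 > 0" using th sg by (simp add: c0_def)
lemma K_pos: "K > 0" using a_pos by (simp add: K_def Gamma_real_pos)
lemma c0_sq: "c0\<^sup>2 = 2 * \<theta> / \<sigma>\<^sup>2" using th sg by (simp add: c0_def power_divide)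

lemma phi_eq: "phi x = K * Psi (a-1) (c0 * (x - \<mu>))"
proof -
  have e: "exp (\<theta> * (x - \<mu>)\<^sup>2 / (2 * \<sigma>\<^sup>2)) * exp (- ((x - \<mu>) * sqrt (2 * \<theta>) / \<sigma>)\<^sup>2 / 4) = 1"
  proof -
    have "((x - \<mu>) * sqrt (2 * \<theta>) / \<sigma>)\<^sup>2 / 4 = \<theta> * (x - \<mu>)\<^sup>2 / (2 * \<sigma>\<^sup>2)"
      using th sg by (simp add: power_mult_distrib power_divide)
    thus ?thesis by (simp add: exp_add[symmetric])
  qed
  have "phi x = (exp (\<theta> * (x - \<mu>)\<^sup>2 / (2 * \<sigma>\<^sup>2)) * exp (- ((x - \<mu>) * sqrt (2 * \<theta>) / \<sigma>)\<^sup>2 / 4)) / Gamma a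
     * Psi (a-1) ((x - \<mu>) * sqrt (2 * \<theta>) / \<sigma>)"
    unfolding phiL_def pcD_def Psi_def a_def by simp
  also have "\<dots> = K * Psi (a-1) (c0 * (x - \<mu>))"
    unfolding e K_def c0_def by (simp add: mult.commute)
  finally show ?thesis .
qed

lemma phi_pos: "phi x > 0"
  unfolding phi_eq using K_pos Psi_pos[of "a-1"] a_pos by simp

lemma phi1_neg: "phi1 x < 0"
  unfolding phi1_def using K_pos c0_pos Psi_pos[of a] a_pos by simp

lemma phi2_pos: "phi2 x > 0"
  unfolding phi2_def using K_pos c0_pos Psi_pos[of "a+1"] a_pos by simp

lemma phi_deriv: "(phi has_real_derivative phi1 x) (at x)"
proof -
  have "((\<lambda>x. K * Psi (a-1) (c0 * (x - \<mu>))) has_real_derivative K * (- Psi (a - 1 + 1) (c0 * (x - \<mu>)) * (c0 * (1 - 0)))) (at x)"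
    by (rule DERIV_cmult, rule DERIV_chain2[OF Psi_deriv]) (use a_pos in \<open>auto intro!: derivative_eq_intros\<close>)
  thus ?thesis unfolding phi_eq[abs_def] phi1_def by (simp add: algebra_simps)
qed

lemma phi1_deriv: "(phi1 has_real_derivative phi2 x) (at x)"
proof -
  have "((\<lambda>x. - K * c0 * Psi a (c0 * (x - \<mu>))) has_real_derivative - K * c0 * (- Psi (a + 1) (c0 * (x - \<mu>)) * (c0 * (1 - 0)))) (at x)"
    by (rule DERIV_cmult, rule DERIV_chain2[OF Psi_deriv]) (use a_pos in \<open>auto intro!: derivative_eq_intros\<close>)
  thus ?thesis unfolding phi1_def[abs_def] phi2_def by (simp add: algebra_simps power2_eq_square)
qed

lemma phi2_deriv: "\<exists>D. (phi2 has_real_derivative D) (at x)"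
proof -
  have "((\<lambda>x. K * c0\<^sup>2 * Psi (a+1) (c0 * (x - \<mu>))) has_real_derivative K * c0\<^sup>2 * (- Psi (a + 1 + 1) (c0 * (x - \<mu>)) * (c0 * (1 - 0)))) (at x)"
    by (rule DERIV_cmult, rule DERIV_chain2[OF Psi_deriv]) (use a_pos in \<open>auto intro!: derivative_eq_intros\<close>)
  thus ?thesis unfolding phi2_def[abs_def] by blast
qed

lemma cont_phi: "continuous_on S phi"
  by (rule continuous_at_imp_continuous_on) (use DERIV_isCont[OF phi_deriv] in blast)
lemma cont_phi1: "continuous_on S phi1"
  by (rule continuous_at_imp_continuous_on) (use DERIV_isCont[OF phi1_deriv] in blast)
lemma cont_phi2: "continuous_on S phi2"
  by (rule continuous_at_imp_continuous_on) (use DERIV_isCont phi2_deriv in blast)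

lemma deriv_phi: "deriv phi x = phi1 x"
  by (rule DERIV_imp_deriv[OF phi_deriv])

lemma phi_ode: "\<sigma>\<^sup>2 / 2 * phi2 x + \<theta> * (\<mu> - x) * phi1 x = lam * phi x"
proof -
  have o: "a * Psi (a-1) (c0 * (x - \<mu>)) - Psi (a+1) (c0 * (x - \<mu>)) - (c0 * (x - \<mu>)) * Psi a (c0 * (x - \<mu>)) = 0"
    by (rule Psi_ode[OF a_pos])
  have s: "\<sigma>\<^sup>2 / 2 * c0\<^sup>2 = \<theta>" unfolding c0_sq using sg by simp
  have l: "\<theta> * a = lam" using th by (simp add: a_def)
  have "\<sigma>\<^sup>2 / 2 * phi2 x + \<theta> * (\<mu> - x) * phi1 x
      = K * (\<sigma>\<^sup>2 / 2 * c0\<^sup>2) * Psi (a+1) (c0 * (x - \<mu>)) + K * \<theta> * (c0 * (x - \<mu>)) * Psi a (c0 * (x - \<mu>))"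
    unfolding phi2_def phi1_def by (simp add: algebra_simps)
  also have "\<dots> = K * \<theta> * (Psi (a+1) (c0 * (x - \<mu>)) + (c0 * (x - \<mu>)) * Psi a (c0 * (x - \<mu>)))"
    unfolding s by (simp add: algebra_simps)
  also have "\<dots> = K * \<theta> * (a * Psi (a-1) (c0 * (x - \<mu>)))" using o by simp
  also have "\<dots> = (\<theta> * a) * (K * Psi (a-1) (c0 * (x - \<mu>)))" by (simp only: mult_ac)
  also have "\<dots> = lam * (K * Psi (a-1) (c0 * (x - \<mu>)))" by (simp only: l)
  also have "\<dots> = lam * phi x" by (simp only: phi_eq)
  finally show ?thesis .
qed

end

locale main = ou +
  fixes \<Phi> :: "real \<Rightarrow> real"
  assumes Phi_d1: "\<forall>x. \<Phi> differentiable at x"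
    and Phi_d2: "\<forall>x. deriv \<Phi> differentiable at x"
    and Phi_sconv: "strictly_convex \<Phi>"
    and k_pos: "\<forall>c\<in>{0..1}. kfun \<theta> lam \<Phi> c > 0"
begin

abbreviation "dP \<equiv> deriv \<Phi>"
abbreviation "kk \<equiv> kfun \<theta> lam \<Phi>"
abbreviation "GG \<equiv> Gfun \<theta> \<mu> lam \<Phi>"

lemma Phi_deriv: "(\<Phi> has_real_derivative dP x) (at x)"
  using Phi_d1 DERIV_deriv_iff_real_differentiable by blast

lemma dP_cont: "isCont dP x"
  using Phi_d2 differentiable_imp_continuous_within by blast

lemma dP_cont_on: "continuous_on S dP"
  by (rule continuous_at_imp_continuous_on) (use dP_cont in blast)

lemma Phi_convex: "convex_on UNIV \<Phi>"
  unfolding convex_on_def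
proof (intro conjI ballI allI impI)
  fix x y u v :: real assume uv: "u \<ge> 0" "v \<ge> 0" "u + v = 1"
  show "\<Phi> (u *\<^sub>R x + v *\<^sub>R y) \<le> u * \<Phi> x + v * \<Phi> y"
  proof (cases "x = y \<or> v = 0 \<or> v = 1")
    case True
    moreover have "x = y \<Longrightarrow> ?thesis"
    proof -
      assume "x = y"
      hence "u *\<^sub>R x + v *\<^sub>R y = (u + v) * x" "u * \<Phi> x + v * \<Phi> y = (u + v) * \<Phi> x"
        by (simp_all add: algebra_simps)
      thus ?thesis using uv by simp
    qed
    moreover have "v = 0 \<Longrightarrow> ?thesis" using uv by simp
    moreover have "v = 1 \<Longrightarrow> ?thesis" using uv by simp
    ultimately show ?thesis by blast
  next
    case False
    hence "\<Phi> ((1 - v) * x + v * y) < (1 - v) * \<Phi> x + v * \<Phi> y"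
      using Phi_sconv uv unfolding strictly_convex_def by auto
    moreover have "u = 1 - v" using uv by simp
    ultimately show ?thesis by simp
  qed
qed simp

lemma dP_strict_mono: assumes "x < y" shows "dP x < dP y"
proof -
  define m where "m = (x + y) / 2"
  have "\<Phi> ((1 - 1/2) * x + (1/2) * y) < (1 - 1/2) * \<Phi> x + (1/2) * \<Phi> y"
    using Phi_sconv[unfolded strictly_convex_def, rule_format, of x y "1/2"] assms by simp
  hence mid: "\<Phi> m < (\<Phi> x + \<Phi> y) / 2" unfolding m_def by (simp add: field_simps)
  have t1: "\<Phi> m - \<Phi> x \<ge> dP x * (m - x)"
    by (rule convex_on_imp_above_tangent[OF Phi_convex]) (auto intro: Phi_deriv)
  have t2: "\<Phi> m - \<Phi> y \<ge> dP y * (m - y)"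
    by (rule convex_on_imp_above_tangent[OF Phi_convex]) (auto intro: Phi_deriv)
  have e: "(dP x - dP y) * ((y - x)/2) = dP x * (m - x) + dP y * (m - y)"
    by (simp add: m_def field_simps)
  have "(dP x - dP y) * ((y - x)/2) \<le> 2 * \<Phi> m - \<Phi> x - \<Phi> y"
    unfolding e using t1 t2 by linarith
  also have "\<dots> < 0" using mid by simp
  finally have "(dP x - dP y) * ((y - x)/2) < 0" .
  thus ?thesis using assms by (simp add: mult_less_0_iff)
qed

lemma kk_def': "kk c = lam + \<theta> + lam * dP c" by (simp add: kfun_def)

lemma kk_strict_mono: "x < y \<Longrightarrow> kk x < kk y"
  unfolding kk_def' using dP_strict_mono[of x y] lam by simp

lemma kk_cont: "isCont kk x"
  unfolding kk_def'[abs_def] by (intro continuous_intros dP_cont)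

lemma kk_cont_on: "continuous_on S kk"
  by (rule continuous_at_imp_continuous_on) (use kk_cont in blast)

lemma Phi_integral: "c \<le> 1 \<Longrightarrow> integral {c..1} dP = \<Phi> 1 - \<Phi> c"
  by (rule integral_unique, rule fundamental_theorem_of_calculus)
     (auto simp: has_real_derivative_iff_has_vector_derivative[symmetric] intro!: DERIV_subset[OF Phi_deriv])

end

context main begin

definition "H x c = kk c / (lam + \<theta>) * phi x - GG x c * phi1 x"
definition "xg c = \<mu> - (lam + \<theta>) * \<mu> * (kk c - \<theta>) / (lam * kk c)"
abbreviation "beta c \<equiv> betaStar \<theta> \<sigma> \<mu> lam \<Phi> c"

lemma GG_def': "GG x c = \<mu> * (kk c - \<theta>) / lam + kk c * (x - \<mu>) / (lam + \<theta>)"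
  by (simp add: Gfun_def)

lemma GG_lin: assumes "kk c \<noteq> 0" shows "GG x c = kk c / (lam + \<theta>) * (x - xg c)"
proof -
  have nz: "lam + \<theta> \<noteq> 0" "lam \<noteq> 0" using lam th by auto
  have e: "kk c / (lam + \<theta>) * ((lam + \<theta>) * \<mu> * (kk c - \<theta>) / (lam * kk c)) = \<mu> * (kk c - \<theta>) / lam"
  proof -
    have "kk c / (lam + \<theta>) * ((lam + \<theta>) * \<mu> * (kk c - \<theta>) / (lam * kk c))
       = (kk c * (lam + \<theta>)) * (\<mu> * (kk c - \<theta>)) / ((kk c * (lam + \<theta>)) * lam)"
      by (simp add: mult_ac)
    also have "\<dots> = \<mu> * (kk c - \<theta>) / lam"
      by (rule mult_divide_mult_cancel_left) (use nz assms in simp)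
    finally show ?thesis .
  qed
  have "kk c / (lam + \<theta>) * (x - xg c) = kk c * (x - \<mu>) / (lam + \<theta>) + kk c / (lam + \<theta>) * ((lam + \<theta>) * \<mu> * (kk c - \<theta>) / (lam * kk c))"
    unfolding xg_def by (simp add: algebra_simps add_divide_distrib diff_divide_distrib)
  also have "\<dots> = GG x c" unfolding e GG_def' by simp
  finally show ?thesis by simp
qed

lemma GG_deriv: "((\<lambda>x. GG x c) has_real_derivative kk c / (lam + \<theta>)) (at x)"
  unfolding GG_def' using lam th by (auto intro!: derivative_eq_intros)

lemma H_deriv: "((\<lambda>x. H x c) has_real_derivative - GG x c * phi2 x) (at x)"
proof -
  note d1 = DERIV_mult[OF GG_deriv phi1_deriv, of c x]
  note d2 = DERIV_cmult[OF phi_deriv, of "kk c / (lam + \<theta>)" x]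
  show ?thesis
    unfolding H_def[abs_def] by (rule DERIV_cong[OF DERIV_diff[OF d2 d1]]) (simp add: algebra_simps)
qed

lemma H_cont: "continuous_on S (\<lambda>x. H x c)"
  by (rule continuous_at_imp_continuous_on) (use DERIV_isCont[OF H_deriv] in blast)

lemma betaStar_eq: "beta c = (THE b. H b c = 0)"
proof -
  have "\<And>b. deriv (\<lambda>x. GG x c) b * phi b - GG b c * deriv phi b = H b c"
    unfolding H_def deriv_phi DERIV_imp_deriv[OF GG_deriv] by simp
  thus ?thesis unfolding betaStar_def by simp
qed

lemma phi_decr: assumes "x < y" shows "phi y < phi x"
proof -
  obtain z where z: "x < z" "z < y" "phi y - phi x = (y - x) * phi1 z"
    using MVT2[OF assms, of phi phi1] phi_deriv by blast
  have "(y - x) * phi1 z < 0" using assms phi1_neg[of z] by (intro mult_pos_neg) auto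
  thus ?thesis using z by simp
qed

lemma phi1_incr: assumes "x < y" shows "phi1 x < phi1 y"
proof -
  obtain z where z: "x < z" "z < y" "phi1 y - phi1 x = (y - x) * phi2 z"
    using MVT2[OF assms, of phi1 phi2] phi1_deriv by blast
  have "(y - x) * phi2 z > 0" using assms phi2_pos[of z] by (intro mult_pos_pos) auto
  thus ?thesis using z by simp
qed

context
  fixes c assumes kp: "kk c > 0"
begin

lemma H_pos_right: assumes "x \<ge> xg c" shows "H x c > 0"
proof -
  have "GG x c \<ge> 0" unfolding GG_lin[OF less_imp_neq[OF kp, symmetric]]
    using kp assms lam th by simp
  hence "- GG x c * phi1 x \<ge> 0" using phi1_neg[of x] by (simp add: mult_nonneg_nonpos)
  moreover have "kk c / (lam + \<theta>) * phi x > 0" using kp lam th phi_pos[of x] by simp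
  ultimately show ?thesis unfolding H_def by simp
qed

lemma H_incr: assumes "x < y" "y \<le> xg c" shows "H x c < H y c"
proof -
  obtain z where z: "x < z" "z < y" "H y c - H x c = (y - x) * (- GG z c * phi2 z)"
    using MVT2[OF assms(1), of "\<lambda>x. H x c" "\<lambda>x. - GG x c * phi2 x"] H_deriv by blast
  have "kk c * (z - xg c) < 0" using kp assms z by (intro mult_pos_neg) auto
  hence "GG z c < 0" unfolding GG_lin[OF less_imp_neq[OF kp, symmetric]]
    using lam th by (simp add: divide_neg_pos)
  hence g: "- GG z c * phi2 z > 0" using phi2_pos[of z] by (simp add: mult_neg_pos)
  have "y - x > 0" using z by simp
  note mult_pos_pos[OF this g]
  thus ?thesis using z by simp
qed

lemma GG_lin': "GG x c = kk c / (lam + \<theta>) * (x - xg c)"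
  by (rule GG_lin) (use kp in simp)

lemma H_neg_exists: "\<exists>x. x < xg c \<and> H x c < 0"
proof -
  define x1 where "x1 = xg c - 1"
  define x2 where "x2 = min x1 \<mu>"
  define m where "m = 2 * lam * phi x2 / \<sigma>\<^sup>2"
  have mpos: "m > 0" unfolding m_def using lam sg phi_pos[of x2] by simp
  have A: "phi2 x \<ge> m" if "x \<le> x2" for x
  proof -
    have "\<theta> * (\<mu> - x) * phi1 x \<le> 0"
      using that th phi1_neg[of x] unfolding x2_def by (intro mult_nonneg_nonpos) auto
    moreover have "phi x \<ge> phi x2" using phi_decr[of x x2] that by (cases "x = x2") auto
    ultimately have "\<sigma>\<^sup>2 / 2 * phi2 x \<ge> lam * phi x2"
      using phi_ode[of x] lam by (smt (verit) mult_left_mono)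
    thus ?thesis unfolding m_def using sg by (simp add: field_simps)
  qed
  define x where "x = x2 - (phi x1 + 1) / m"
  have xx2: "x < x2" unfolding x_def using mpos phi_pos[of x1]
    by (smt (verit) divide_pos_pos)
  obtain z where z: "x < z" "z < x2" "phi1 x2 - phi1 x = (x2 - x) * phi2 z"
    using MVT2[OF xx2, of phi1 phi2] phi1_deriv by blast
  have "(x2 - x) * phi2 z \<ge> (x2 - x) * m" using A[of z] z xx2 by (intro mult_left_mono) auto
  also have "(x2 - x) * m = phi x1 + 1" unfolding x_def using mpos by simp
  finally have B: "- phi1 x > phi x1" using z(3) phi1_neg[of x2] by linarith
  have xx1: "x < x1" using xx2 unfolding x2_def by simp
  obtain w where w: "x < w" "w < x1" "phi x1 - phi x = (x1 - x) * phi1 w"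
    using MVT2[OF xx1, of phi phi1] phi_deriv by blast
  have "(x1 - x) * phi1 w \<ge> (x1 - x) * phi1 x"
    using phi1_incr[OF w(1)] xx1 by (intro mult_left_mono) auto
  hence C: "phi x \<le> phi x1 - (x1 - x) * phi1 x" using w(3) by linarith
  have "phi x + (xg c - x) * phi1 x = phi x + (x1 - x) * phi1 x + phi1 x" unfolding x1_def by (simp add: algebra_simps)
  also have "\<dots> < 0" using B C by linarith
  finally have neg: "phi x + (xg c - x) * phi1 x < 0" .
  have "H x c = kk c / (lam + \<theta>) * (phi x + (xg c - x) * phi1 x)"
  proof -
    define q where "q = kk c / (lam + \<theta>)"
    show ?thesis unfolding H_def GG_lin' q_def[symmetric] by (simp add: algebra_simps)
  qed
  also have "\<dots> < 0" using neg kp lam th by (intro mult_pos_neg) auto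
  finally have "H x c < 0" .
  moreover have "x < xg c" using xx1 unfolding x1_def by simp
  ultimately show ?thesis by blast
qed

lemma H_ex1: "\<exists>!b. H b c = 0"
proof -
  obtain x0 where x0: "x0 < xg c" "H x0 c < 0" using H_neg_exists by blast
  have "\<exists>b\<ge>x0. b \<le> xg c \<and> H b c = 0"
    by (rule IVT'[of "\<lambda>x. H x c"]) (use x0 H_pos_right[of "xg c"] H_cont in auto)
  then obtain b where b: "H b c = 0" by blast
  have lt: "r < xg c" if "H r c = 0" for r
    using H_pos_right[of r] that by force
  show ?thesis
  proof (rule ex1I[of _ b])
    fix r assume r: "H r c = 0"
    show "r = b"
    proof (rule ccontr)
      assume "r \<noteq> b"
      hence "r < b \<or> b < r" by auto
      thus False using H_incr[of r b] H_incr[of b r] lt[OF r] lt[OF b] r b by auto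
    qed
  qed (rule b)
qed

lemma beta_root: "H (beta c) c = 0"
  unfolding betaStar_eq by (rule theI'[OF H_ex1])

lemma beta_lt_xg: "beta c < xg c"
  using H_pos_right[of "beta c"] beta_root by force

lemma H_neg: "x < beta c \<Longrightarrow> H x c < 0"
  using H_incr[of x "beta c"] beta_lt_xg beta_root by simp

lemma H_pos: "x > beta c \<Longrightarrow> H x c > 0"
proof (cases "x \<ge> xg c")
  case True thus "x > beta c \<Longrightarrow> H x c > 0" using H_pos_right by simp
next
  case False thus "x > beta c \<Longrightarrow> H x c > 0" using H_incr[of "beta c" x] beta_root by simp
qed

lemma GG_beta_neg: "GG (beta c) c < 0"
  unfolding GG_lin' using beta_lt_xg kp lam th by (intro mult_pos_neg) auto

lemma k_beta: "kk c * beta c < \<theta> * \<mu>"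
proof -
  define xs where "xs = \<theta> * \<mu> / kk c"
  have kxs: "kk c * xs = \<theta> * \<mu>" unfolding xs_def using kp by simp
  have "GG xs c = \<theta> * (kk c * (\<mu> - xs)) / (lam * (lam + \<theta>))"
  proof -
    have "GG xs c = \<mu> * (kk c - \<theta>) / lam + (\<theta> * \<mu> - kk c * \<mu>) / (lam + \<theta>)"
      unfolding GG_def' using kxs by (simp add: algebra_simps)
    also have "\<dots> = \<theta> * (\<mu> * kk c - \<theta> * \<mu>) / (lam * (lam + \<theta>))"
      using lam th by (simp add: field_simps)
    finally show ?thesis using kxs by (simp add: algebra_simps)
  qed
  hence "H xs c = kk c / (lam * (lam + \<theta>)) * (lam * phi xs - \<theta> * (\<mu> - xs) * phi1 xs)"
  proof -
    assume g: "GG xs c = \<theta> * (kk c * (\<mu> - xs)) / (lam * (lam + \<theta>))"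
    define q where "q = kk c / (lam * (lam + \<theta>))"
    have q1: "kk c / (lam + \<theta>) = q * lam" unfolding q_def using lam by simp
    have q2: "GG xs c = q * (\<theta> * (\<mu> - xs))" unfolding g q_def by simp
    show ?thesis unfolding H_def q1 q2 q_def[symmetric] by (simp add: algebra_simps)
  qed
  also have "lam * phi xs - \<theta> * (\<mu> - xs) * phi1 xs = \<sigma>\<^sup>2 / 2 * phi2 xs"
    using phi_ode[of xs] by simp
  finally have "H xs c > 0" using kp lam th sg phi2_pos[of xs] by simp
  hence "xs > beta c" using H_neg[of xs] beta_root by (cases rule: linorder_cases[of xs "beta c"]) auto
  hence "kk c * beta c < kk c * xs" using kp by simp
  thus ?thesis using kxs by simp
qed

end
end

context main begin

lemma kpos01: "c \<in> {0..1} \<Longrightarrow> kk c > 0" using k_pos by blast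

lemma H_scaled: assumes "kk c > 0"
  shows "H x c = kk c * (phi x / (lam + \<theta>) - (\<mu> / lam - \<mu> * \<theta> / (lam * kk c) + (x - \<mu>) / (lam + \<theta>)) * phi1 x)"
proof -
  have e: "kk c * (\<mu> * \<theta> / (lam * kk c)) = \<mu> * \<theta> / lam" using assms by simp
  have "kk c * (\<mu> / lam - \<mu> * \<theta> / (lam * kk c) + (x - \<mu>) / (lam + \<theta>))
      = kk c * \<mu> / lam - kk c * (\<mu> * \<theta> / (lam * kk c)) + kk c * (x - \<mu>) / (lam + \<theta>)"
    by (simp add: algebra_simps)
  also have "\<dots> = kk c * \<mu> / lam - \<mu> * \<theta> / lam + kk c * (x - \<mu>) / (lam + \<theta>)" by (simp only: e)
  also have "\<dots> = GG x c" unfolding GG_def' by (simp add: algebra_simps diff_divide_distrib)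
  finally have g: "GG x c = kk c * (\<mu> / lam - \<mu> * \<theta> / (lam * kk c) + (x - \<mu>) / (lam + \<theta>))" by simp
  show ?thesis unfolding H_def g by (simp add: algebra_simps)
qed

lemma beta_decr:
  assumes c: "c1 \<in> {0..1}" "c2 \<in> {0..1}" "c1 < c2"
  shows "beta c2 < beta c1"
proof -
  define x where "x = beta c1"
  have k1: "kk c1 > 0" and k2: "kk c2 > 0" using kpos01 c by auto
  have k12: "kk c1 < kk c2" using kk_strict_mono c by auto
  define R where "R k = phi x / (lam + \<theta>) - (\<mu> / lam - \<mu> * \<theta> / (lam * k) + (x - \<mu>) / (lam + \<theta>)) * phi1 x" for k
  have "kk c1 * R (kk c1) = 0" using beta_root[OF k1] H_scaled[OF k1, of x] unfolding x_def R_def by simp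
  hence R1: "R (kk c1) = 0" using k1 by simp
  have d: "R (kk c2) - R (kk c1) = \<mu> * \<theta> / lam * ((1 / kk c2 - 1 / kk c1) * phi1 x)"
    unfolding R_def by (simp add: algebra_simps)
  have "1 / kk c2 - 1 / kk c1 < 0" using k1 k12 by (simp add: frac_less2)
  hence "(1 / kk c2 - 1 / kk c1) * phi1 x > 0" using phi1_neg[of x] by (rule mult_neg_neg)
  moreover have "\<mu> * \<theta> / lam > 0" using mu th lam by simp
  ultimately have "R (kk c2) - R (kk c1) > 0" unfolding d by (rule mult_pos_pos[rotated])
  hence "H x c2 > 0" using R1 H_scaled[OF k2, of x] k2 unfolding R_def by simp
  thus ?thesis using H_neg[OF k2, of x] beta_root[OF k2] unfolding x_def
    by (cases rule: linorder_cases[of "beta c1" "beta c2"]) auto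
qed

lemma beta_inj: "c1 \<in> {0..1} \<Longrightarrow> c2 \<in> {0..1} \<Longrightarrow> beta c1 = beta c2 \<Longrightarrow> c1 = c2"
  using beta_decr[of c1 c2] beta_decr[of c2 c1] by (cases rule: linorder_cases[of c1 c2]) auto

lemma beta_mono: "c1 \<in> {0..1} \<Longrightarrow> c2 \<in> {0..1} \<Longrightarrow> c1 \<le> c2 \<Longrightarrow> beta c2 \<le> beta c1"
  using beta_decr[of c1 c2] by (cases "c1 = c2") auto

lemma H_cont_c: "isCont (\<lambda>c. H x c) cc"
  unfolding H_def GG_def' by (intro continuous_intros kk_cont) (use lam th in auto)

lemma beta_cont: assumes cc: "cc \<in> {0..1}" shows "continuous (at cc within {0..1}) beta"
  unfolding continuous_within
proof (rule order_tendstoI)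
  have k0: "kk cc > 0" using kpos01 cc by simp
  have ev01: "\<forall>\<^sub>F c in at cc within {0..1}. c \<in> {0..1}" by (auto simp: eventually_at_filter)
  fix a assume a: "a < beta cc"
  have "H a cc < 0" using H_neg[OF k0 a] .
  hence "\<forall>\<^sub>F c in at cc within {0..1}. H a c < 0"
    using H_cont_c[where x=a and cc=cc] by (intro order_tendstoD(2)) (auto simp: isCont_def intro: tendsto_within_subset)
  thus "\<forall>\<^sub>F c in at cc within {0..1}. a < beta c"
    using ev01
  proof eventually_elim
    case (elim c)
    hence kc: "kk c > 0" using kpos01 by simp
    show ?case using elim H_pos[OF kc, of a] beta_root[OF kc]
      by (cases rule: linorder_cases[of a "beta c"]) auto
  qed
next
  have k0: "kk cc > 0" using kpos01 cc by simp
  have ev01: "\<forall>\<^sub>F c in at cc within {0..1}. c \<in> {0..1}" by (auto simp: eventually_at_filter)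
  fix a assume a: "a > beta cc"
  have "H a cc > 0" using H_pos[OF k0 a] .
  hence "\<forall>\<^sub>F c in at cc within {0..1}. H a c > 0"
    using H_cont_c[where x=a and cc=cc] by (intro order_tendstoD(1)) (auto simp: isCont_def intro: tendsto_within_subset)
  thus "\<forall>\<^sub>F c in at cc within {0..1}. beta c < a"
    using ev01
  proof eventually_elim
    case (elim c)
    hence kc: "kk c > 0" using kpos01 by simp
    show ?case using elim H_neg[OF kc, of a] beta_root[OF kc]
      by (cases rule: linorder_cases[of a "beta c"]) auto
  qed
qed

lemma beta_cont_on: "continuous_on {0..1} beta"
  using beta_cont by (auto simp: continuous_on_eq_continuous_within)

end

context main begin

definition "AA c = GG (beta c) c / phi (beta c)"
definition "vv x c = GG x c - AA c * phi x"
definition "v1 x c = kk c / (lam + \<theta>) - AA c * phi1 x"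
definition "UU x c = (if x > beta c then vv x c else 0)"
definition "U1 x c = max 0 (v1 x c)"
definition "U2 x c = (if x > beta c then - AA c * phi2 x else 0)"

lemma ufun_eq: "ufun \<theta> \<sigma> \<mu> lam \<Phi> x c = UU x c"
  unfolding ufun_def UU_def vv_def AA_def Let_def by simp

lemma AA_neg: "c \<in> {0..1} \<Longrightarrow> AA c < 0"
  unfolding AA_def using GG_beta_neg[OF kpos01] phi_pos by (simp add: divide_neg_pos)

lemma vv_deriv: "((\<lambda>x. vv x c) has_real_derivative v1 x c) (at x)"
proof -
  have "((\<lambda>x. GG x c - AA c * phi x) has_real_derivative kk c / (lam + \<theta>) - AA c * phi1 x) (at x)"
    by (intro DERIV_diff DERIV_cmult GG_deriv phi_deriv)
  thus ?thesis unfolding vv_def[abs_def] v1_def .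
qed

lemma v1_deriv: "((\<lambda>x. v1 x c) has_real_derivative - AA c * phi2 x) (at x)"
proof -
  have "((\<lambda>x. kk c / (lam + \<theta>) - AA c * phi1 x) has_real_derivative 0 - AA c * phi2 x) (at x)"
    by (intro DERIV_diff DERIV_cmult DERIV_const phi1_deriv)
  thus ?thesis unfolding v1_def[abs_def] by simp
qed

context fixes c :: real assumes c01: "c \<in> {0..1}"
begin

lemma v1_beta: "v1 (beta c) c = 0"
proof -
  have "v1 (beta c) c = H (beta c) c / phi (beta c)"
    unfolding v1_def AA_def H_def using phi_pos[of "beta c"] by (simp add: field_simps)
  thus ?thesis using beta_root[OF kpos01[OF c01]] by simp
qed

lemma vv_beta: "vv (beta c) c = 0"
  unfolding vv_def AA_def using phi_pos[of "beta c"] by simp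

lemma v1_incr: assumes "x < y" shows "v1 x c < v1 y c"
proof -
  obtain z where z: "x < z" "z < y" "v1 y c - v1 x c = (y - x) * (- AA c * phi2 z)"
    using MVT2[OF assms, of "\<lambda>x. v1 x c" "\<lambda>x. - AA c * phi2 x"] v1_deriv by blast
  have "- AA c * phi2 z > 0" using AA_neg[OF c01] phi2_pos[of z] by (simp add: mult_neg_pos)
  moreover have "y - x > 0" using assms by simp
  ultimately have "(y - x) * (- AA c * phi2 z) > 0" by (rule mult_pos_pos[rotated])
  thus ?thesis using z by simp
qed

lemma v1_pos: "x > beta c \<Longrightarrow> v1 x c > 0"
  using v1_incr[of "beta c" x] v1_beta by simp

lemma v1_neg: "x < beta c \<Longrightarrow> v1 x c < 0"
  using v1_incr[of x "beta c"] v1_beta by simp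

lemma vv_pos: assumes "x > beta c" shows "vv x c > 0"
proof -
  obtain z where z: "beta c < z" "z < x" "vv x c - vv (beta c) c = (x - beta c) * v1 z c"
    using MVT2[OF assms, of "\<lambda>x. vv x c" "\<lambda>x. v1 x c"] vv_deriv by blast
  have "(x - beta c) * v1 z c > 0" using assms v1_pos[OF z(1)] by (intro mult_pos_pos) auto
  thus ?thesis using z vv_beta by simp
qed

lemma UU_nonneg: "UU x c \<ge> 0"
  unfolding UU_def using vv_pos[of x] by (auto intro: less_imp_le)

lemma U1_eq: "U1 x c = (if x > beta c then v1 x c else 0)"
  unfolding U1_def using v1_pos[of x] v1_neg[of x] v1_beta
  by (cases rule: linorder_cases[of x "beta c"]) auto

lemma UU_deriv: "((\<lambda>x. UU x c) has_real_derivative U1 x c) (at x)"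
proof (cases rule: linorder_cases[of x "beta c"])
  case less
  have d: "((\<lambda>x. 0) has_real_derivative 0) (at x)" by simp
  have e: "U1 x c = 0" using less by (simp add: U1_eq)
  show ?thesis unfolding e
    by (rule has_field_derivative_transform_within_open[OF d, where S = "{..<beta c}"])
       (use less in \<open>auto simp: UU_def U1_eq\<close>)
next
  case greater
  have e: "U1 x c = v1 x c" using greater by (simp add: U1_eq)
  show ?thesis unfolding e
    by (rule has_field_derivative_transform_within_open[OF vv_deriv, where S = "{beta c<..}"])
       (use greater in \<open>auto simp: UU_def U1_eq\<close>)
next
  case equal
  have d0: "((\<lambda>x. vv x c) has_real_derivative 0) (at (beta c))"
    using vv_deriv[of c "beta c"] v1_beta by simp
  have "((\<lambda>z. (UU z c - UU (beta c) c) / (z - beta c)) \<longlongrightarrow> 0) (at (beta c))"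
  proof (rule metric_tendsto_imp_tendsto)
    show "((\<lambda>z. (vv z c - vv (beta c) c) / (z - beta c)) \<longlongrightarrow> 0) (at (beta c))"
      using d0 by (simp add: has_field_derivative_iff)
    show "\<forall>\<^sub>F z in at (beta c). dist ((UU z c - UU (beta c) c) / (z - beta c)) 0
          \<le> dist ((vv z c - vv (beta c) c) / (z - beta c)) 0"
      by (intro always_eventually allI) (auto simp: UU_def vv_beta abs_divide divide_right_mono)
  qed
  thus ?thesis using equal by (simp add: has_field_derivative_iff U1_eq)
qed

lemma U1_deriv: assumes "x \<noteq> beta c" shows "((\<lambda>x. U1 x c) has_real_derivative U2 x c) (at x)"
proof (cases "x < beta c")
  case True
  have d: "((\<lambda>x. 0) has_real_derivative 0) (at x)" by simp
  have e: "U2 x c = 0" using True by (simp add: U2_def)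
  show ?thesis unfolding e
    by (rule has_field_derivative_transform_within_open[OF d, where S = "{..<beta c}"])
       (use True in \<open>auto simp: U1_eq U2_def\<close>)
next
  case False
  hence g: "x > beta c" using assms by simp
  have e: "U2 x c = - AA c * phi2 x" using g by (simp add: U2_def)
  show ?thesis unfolding e
    by (rule has_field_derivative_transform_within_open[OF v1_deriv, where S = "{beta c<..}"])
       (use g in \<open>auto simp: U1_eq U2_def\<close>)
qed

end

lemma AA_cont: "continuous_on {0..1} AA"
proof -
  have "continuous_on {0..1} (\<lambda>c. GG (beta c) c)"
    unfolding GG_def' by (intro continuous_intros beta_cont_on kk_cont_on) (use lam th in auto)
  moreover have "continuous_on {0..1} (\<lambda>c. phi (beta c))"
    by (rule continuous_on_compose2[OF cont_phi beta_cont_on]) auto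
  ultimately show ?thesis unfolding AA_def[abs_def]
    by (intro continuous_intros, auto) (metis less_irrefl phi_pos)
qed

end

lemma finite_negl_diff:
  fixes S :: "real set"
  assumes "finite N"
  shows "negligible {y \<in> S - (S - N). f y \<noteq> (0::real)}" "negligible {y \<in> (S - N) - S. f y \<noteq> 0}"
proof -
  have "{y \<in> S - (S - N). f y \<noteq> 0} \<subseteq> N" by auto
  thus "negligible {y \<in> S - (S - N). f y \<noteq> (0::real)}"
    using negligible_subset[OF negligible_finite[OF assms]] by blast
  show "negligible {y \<in> (S - N) - S. f y \<noteq> 0}" by (rule negligible_subset[of "{}"]) auto
qed

lemma integral_diffN: "finite N \<Longrightarrow> integral (S - N) f = integral S (f :: real \<Rightarrow> real)"
  using integral_spike_set[OF finite_negl_diff(2,1)] by metis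

lemma integrable_diffN: "finite N \<Longrightarrow> (f :: real \<Rightarrow> real) integrable_on S \<Longrightarrow> f integrable_on (S - N)"
  using integrable_spike_set[OF _ finite_negl_diff(1,2)] by metis

lemma integrable_diffN': "finite N \<Longrightarrow> (f :: real \<Rightarrow> real) integrable_on (S - N) \<Longrightarrow> f integrable_on S"
  using integrable_spike_set[OF _ finite_negl_diff(2,1)] by metis

lemma DCT_deriv:
  fixes g :: "real \<Rightarrow> real \<Rightarrow> real" and g' :: "real \<Rightarrow> real"
  assumes int: "\<And>x. g x integrable_on {c..d}"
    and fin: "finite N"
    and der: "\<And>y. y \<in> {c..d} \<Longrightarrow> y \<notin> N \<Longrightarrow> ((\<lambda>x. g x y) has_real_derivative g' y) (at x0)"
    and lip: "\<And>x y. y \<in> {c..d} \<Longrightarrow> \<bar>x - x0\<bar> \<le> 1 \<Longrightarrow> \<bar>g x y - g x0 y\<bar> \<le> L * \<bar>x - x0\<bar>"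
  shows "g' integrable_on {c..d} \<and> ((\<lambda>x. integral {c..d} (g x)) has_real_derivative integral {c..d} g') (at x0)"
proof -
  define S' where "S' = {c..d} - N"
  define I where "I x = integral {c..d} (g x)" for x
  have seq: "g' integrable_on S' \<and> (\<lambda>n. (I (X n) - I x0) / (X n - x0)) \<longlonglongrightarrow> integral S' g'"
    if X: "\<And>n. X n \<noteq> x0" "X \<longlonglongrightarrow> x0" for X
  proof -
    obtain N0 where N0: "\<And>n. n \<ge> N0 \<Longrightarrow> dist (X n) x0 < 1"
      using X(2) unfolding lim_sequentially by (meson zero_less_one)
    define q where "q n y = (g (X (n + N0)) y - g x0 y) / (X (n + N0) - x0)" for n y
    have qint: "q n integrable_on S'" for n
      unfolding q_def S'_def by (intro integrable_diffN[OF fin] integrable_on_divide integrable_diff int)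
    have cint: "(\<lambda>_. L) integrable_on S'"
      unfolding S'_def by (intro integrable_diffN[OF fin] integrable_const_ivl)
    have bnd: "norm (q n y) \<le> L" if y: "y \<in> S'" for n y
    proof -
      have d: "\<bar>X (n + N0) - x0\<bar> \<le> 1" using N0[of "n + N0"] by (simp add: dist_real_def)
      have nz: "X (n + N0) - x0 \<noteq> 0" using X(1) by simp
      have "\<bar>g (X (n + N0)) y - g x0 y\<bar> \<le> L * \<bar>X (n + N0) - x0\<bar>"
        using lip[OF _ d, of y] y by (simp add: S'_def)
      thus ?thesis unfolding q_def using nz by (simp add: abs_divide divide_le_eq)
    qed
    have conv: "(\<lambda>n. q n y) \<longlonglongrightarrow> g' y" if y: "y \<in> S'" for y
    proof -
      have "((\<lambda>x. (g x y - g x0 y) / (x - x0)) \<longlongrightarrow> g' y) (at x0)"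
        using der[of y] y by (simp add: S'_def has_field_derivative_iff)
      moreover have "\<forall>n. X (n + N0) \<in> UNIV - {x0}" using X(1) by simp
      moreover have "(\<lambda>n. X (n + N0)) \<longlonglongrightarrow> x0" using X(2) by (rule LIMSEQ_ignore_initial_segment)
      ultimately have "((\<lambda>x. (g x y - g x0 y) / (x - x0)) \<circ> (\<lambda>n. X (n + N0))) \<longlonglongrightarrow> g' y"
        using tendsto_at_iff_sequentially[of "\<lambda>x. (g x y - g x0 y) / (x - x0)" "g' y" x0 UNIV] by simp
      thus ?thesis unfolding q_def o_def by simp
    qed
    note dc = dominated_convergence[OF qint cint bnd conv]
    have eqI: "integral S' (q n) = (I (X (n + N0)) - I x0) / (X (n + N0) - x0)" for n
      unfolding q_def S'_def I_def integral_diffN[OF fin]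
      by (simp add: integral_diff int)
    have "(\<lambda>n. (I (X (n + N0)) - I x0) / (X (n + N0) - x0)) \<longlonglongrightarrow> integral S' g'"
      using dc(2) unfolding eqI .
    hence "(\<lambda>n. (I (X n) - I x0) / (X n - x0)) \<longlonglongrightarrow> integral S' g'"
      by (rule LIMSEQ_offset)
    thus ?thesis using dc(1) by simp
  qed
  define X0 where "X0 n = x0 + 1 / real (Suc n)" for n
  have "X0 \<longlonglongrightarrow> x0 + 0" unfolding X0_def by (intro tendsto_intros LIMSEQ_Suc lim_inverse_n')
  hence "g' integrable_on S'" using seq[of X0] unfolding X0_def by simp
  hence gi: "g' integrable_on {c..d}" unfolding S'_def by (rule integrable_diffN'[OF fin])
  have eqS: "integral S' g' = integral {c..d} g'" unfolding S'_def by (rule integral_diffN[OF fin])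
  have "((\<lambda>x. (I x - I x0) / (x - x0)) \<longlongrightarrow> integral {c..d} g') (at x0)"
    unfolding tendsto_at_iff_sequentially o_def using seq eqS by auto
  thus ?thesis using gi unfolding has_field_derivative_iff I_def by simp
qed

lemma DCT_cont:
  fixes g :: "real \<Rightarrow> real \<Rightarrow> real" and N :: "real \<Rightarrow> real set"
  assumes int: "\<And>x c. c \<in> {0..1} \<Longrightarrow> g x integrable_on {c..1}"
    and bnd: "\<And>B. \<exists>M. \<forall>x y. \<bar>x\<bar> \<le> B \<longrightarrow> y \<in> {0..1} \<longrightarrow> \<bar>g x y\<bar> \<le> M"
    and fin: "\<And>x. finite (N x)"
    and pc: "\<And>x y. y \<in> {0..1} \<Longrightarrow> y \<notin> N x \<Longrightarrow> isCont (\<lambda>x. g x y) x"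
  shows "continuous_on (UNIV \<times> {0..1}) (\<lambda>p. integral {snd p..1} (g (fst p)))"
  unfolding continuous_on_sequentially
proof (intro allI ballI impI, elim conjE)
  fix P and p0 :: "real \<times> real"
  assume p0: "p0 \<in> UNIV \<times> {0..1}" and Pin: "\<forall>n. P n \<in> UNIV \<times> {0..1}" and PL: "P \<longlonglongrightarrow> p0"
  define xs where "xs n = fst (P n)" for n
  define cs where "cs n = snd (P n)" for n
  define x0 where "x0 = fst p0"
  define c0 where "c0 = snd p0"
  have xsL: "xs \<longlonglongrightarrow> x0" unfolding xs_def x0_def using PL by (intro tendsto_fst)
  have csL: "cs \<longlonglongrightarrow> c0" unfolding cs_def c0_def using PL by (intro tendsto_snd)
  have cs01: "cs n \<in> {0..1}" for n using Pin by (auto simp: cs_def mem_Times_iff)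
  have c001: "c0 \<in> {0..1}" using p0 by (auto simp: c0_def mem_Times_iff)
  obtain K where K: "\<And>n. norm (xs n) \<le> K" using convergent_imp_Bseq[OF convergentI[OF xsL]] unfolding Bseq_def by auto
  obtain M where M: "\<And>x y. \<bar>x\<bar> \<le> K \<Longrightarrow> y \<in> {0..1} \<Longrightarrow> \<bar>g x y\<bar> \<le> M"
    using bnd[of K] by blast
  define S' where "S' = {0..1} - insert c0 (N x0)"
  have finN: "finite (insert c0 (N x0))" using fin by simp
  define f where "f n y = (if y \<in> {cs n..1} then g (xs n) y else 0)" for n y
  define fl where "fl y = (if y \<in> {c0..1} then g x0 y else 0)" for y
  have eqn: "integral {cs n..1} (g (xs n)) = integral S' (f n)" for n
  proof -
    have "integral {0..1} (f n) = integral ({cs n..1} \<inter> {0..1}) (g (xs n))"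
      unfolding f_def by (rule integral_restrict_Int)
    also have "{cs n..1} \<inter> {0..1} = {cs n..1}" using cs01[of n] by auto
    finally show ?thesis unfolding S'_def integral_diffN[OF finN] by simp
  qed
  have eql: "integral {c0..1} (g x0) = integral S' fl"
  proof -
    have "integral {0..1} fl = integral ({c0..1} \<inter> {0..1}) (g x0)"
      unfolding fl_def by (rule integral_restrict_Int)
    also have "{c0..1} \<inter> {0..1} = {c0..1}" using c001 by auto
    finally show ?thesis unfolding S'_def integral_diffN[OF finN] by simp
  qed
  have fint: "f n integrable_on S'" for n
  proof -
    have e: "{cs n..1} \<inter> {0..1} = {cs n..1}" using cs01[of n] by auto
    have "f n integrable_on {0..1}"
      unfolding f_def integrable_restrict_Int e using cs01[of n] int[of "cs n" "xs n"] by simp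
    thus ?thesis unfolding S'_def by (rule integrable_diffN[OF finN])
  qed
  have Mint: "(\<lambda>_. M) integrable_on S'"
    unfolding S'_def by (intro integrable_diffN[OF finN] integrable_const_ivl)
  have fb: "norm (f n y) \<le> M" if "y \<in> S'" for n y
  proof -
    have "\<bar>g (xs n) y\<bar> \<le> M" using M[of "xs n" y] K[of n] that by (simp add: S'_def)
    moreover have "M \<ge> 0" using M[of "xs n" y] K[of n] that by (simp add: S'_def)
    ultimately show ?thesis unfolding f_def by simp
  qed
  have fc: "(\<lambda>n. f n y) \<longlonglongrightarrow> fl y" if y: "y \<in> S'" for y
  proof (cases "y < c0")
    case True
    have "\<forall>\<^sub>F n in sequentially. y < cs n" using csL True by (rule order_tendstoD)
    hence "\<forall>\<^sub>F n in sequentially. f n y = 0" by eventually_elim (auto simp: f_def)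
    moreover have "fl y = 0" using True by (simp add: fl_def)
    ultimately show ?thesis by (simp add: tendsto_eventually)
  next
    case False
    hence yc: "c0 < y" using y by (auto simp: S'_def)
    have y1: "y \<le> 1" "y \<in> {0..1}" "y \<notin> N x0" using y by (auto simp: S'_def)
    have "\<forall>\<^sub>F n in sequentially. cs n < y" using csL yc by (rule order_tendstoD)
    hence ev: "\<forall>\<^sub>F n in sequentially. g (xs n) y = f n y" by eventually_elim (use y1 in \<open>auto simp: f_def\<close>)
    have "(\<lambda>n. g (xs n) y) \<longlonglongrightarrow> g x0 y"
      by (rule isCont_tendsto_compose[OF pc[OF y1(2,3)] xsL])
    hence "(\<lambda>n. f n y) \<longlonglongrightarrow> g x0 y" by (rule Lim_transform_eventually[OF _ ev])
    moreover have "fl y = g x0 y" using yc y1 by (simp add: fl_def)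
    ultimately show ?thesis by simp
  qed
  note dc = dominated_convergence[OF fint Mint fb fc]
  show "((\<lambda>p. integral {snd p..1} (g (fst p))) \<circ> P) \<longlonglongrightarrow> integral {snd p0..1} (g (fst p0))"
    using dc(2) unfolding o_def xs_def[symmetric] cs_def[symmetric] x0_def[symmetric] c0_def[symmetric] eqn eql
    by (simp add: xs_def cs_def)
qed


lemma cont_bound:
  fixes h :: "real \<Rightarrow> real \<Rightarrow> real"
  assumes "continuous_on (UNIV \<times> {0..1}) (\<lambda>p. h (fst p) (snd p))"
  shows "\<exists>M. \<forall>x y. \<bar>x\<bar> \<le> B \<longrightarrow> y \<in> {0..1} \<longrightarrow> \<bar>h x y\<bar> \<le> M"
proof -
  define KK where "KK = {-B..B} \<times> {0..(1::real)}"
  have cK: "compact KK" unfolding KK_def by (intro compact_Times compact_Icc)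
  have cc: "continuous_on KK (\<lambda>p. h (fst p) (snd p))"
    by (rule continuous_on_subset[OF assms]) (auto simp: KK_def)
  have "compact ((\<lambda>p. h (fst p) (snd p)) ` KK)" by (rule compact_continuous_image[OF cc cK])
  hence "bounded ((\<lambda>p. h (fst p) (snd p)) ` KK)" by (rule compact_imp_bounded)
  then obtain M where M: "\<And>z. z \<in> (\<lambda>p. h (fst p) (snd p)) ` KK \<Longrightarrow> norm z \<le> M"
    unfolding bounded_iff by blast
  show ?thesis
  proof (intro exI allI impI)
    fix x y assume "\<bar>x\<bar> \<le> B" "y \<in> {0..(1::real)}"
    hence "(x, y) \<in> KK" by (auto simp: KK_def)
    thus "\<bar>h x y\<bar> \<le> M" using M[of "h x y"] by force
  qed
qed

context main begin

abbreviation "DD \<equiv> UNIV \<times> {0..(1::real)}"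

lemma cAA: "continuous_on DD (\<lambda>p. AA (snd p))"
  by (rule continuous_on_compose2[OF AA_cont continuous_on_snd[OF continuous_on_id]]) auto
lemma cbeta: "continuous_on DD (\<lambda>p. beta (snd p))"
  by (rule continuous_on_compose2[OF beta_cont_on continuous_on_snd[OF continuous_on_id]]) auto
lemma ckk: "continuous_on S (\<lambda>p. kk (snd p))"
  by (rule continuous_on_compose2[OF kk_cont_on continuous_on_snd[OF continuous_on_id]]) auto
lemma cphi: "continuous_on S (\<lambda>p. phi (fst p))"
  by (rule continuous_on_compose2[OF cont_phi continuous_on_fst[OF continuous_on_id]]) auto
lemma cphi1: "continuous_on S (\<lambda>p. phi1 (fst p))"
  by (rule continuous_on_compose2[OF cont_phi1 continuous_on_fst[OF continuous_on_id]]) auto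
lemma cphi2: "continuous_on S (\<lambda>p. phi2 (fst p))"
  by (rule continuous_on_compose2[OF cont_phi2 continuous_on_fst[OF continuous_on_id]]) auto

lemma cv1: "continuous_on DD (\<lambda>p. v1 (fst p) (snd p))"
  unfolding v1_def by (intro continuous_intros cAA ckk cphi1) (use lam th in auto)
lemma cU1: "continuous_on DD (\<lambda>p. U1 (fst p) (snd p))"
  unfolding U1_def by (intro continuous_on_max continuous_on_const cv1)
lemma cvv: "continuous_on DD (\<lambda>p. vv (fst p) (snd p))"
  unfolding vv_def GG_def' by (intro continuous_intros cAA ckk cphi continuous_on_fst continuous_on_id) (use lam th in auto)
lemma cAphi2: "continuous_on DD (\<lambda>p. - AA (snd p) * phi2 (fst p))"
  by (intro continuous_intros cAA cphi2)
lemma cUU: "continuous_on DD (\<lambda>p. UU (fst p) (snd p))"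
proof -
  have "continuous_on DD (\<lambda>p. if fst p - beta (snd p) \<le> 0 then 0 else vv (fst p) (snd p))"
  proof (rule continuous_on_cases_le)
    show "continuous_on {p \<in> DD. 0 \<le> fst p - beta (snd p)} (\<lambda>p. vv (fst p) (snd p))"
      by (rule continuous_on_subset[OF cvv]) auto
    show "continuous_on DD (\<lambda>p. fst p - beta (snd p))"
      by (intro continuous_intros cbeta)
    fix p assume "p \<in> DD" "fst p - beta (snd p) = 0"
    thus "0 = vv (fst p) (snd p)" using vv_beta[of "snd p"] by (auto simp: mem_Times_iff)
  qed (rule continuous_on_const)
  moreover have "(\<lambda>p. if fst p - beta (snd p) \<le> 0 then 0 else vv (fst p) (snd p)) = (\<lambda>p. UU (fst p) (snd p))"
    by (auto simp: UU_def fun_eq_iff)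
  ultimately show ?thesis by metis
qed

lemma AA_bound: "\<exists>A. \<forall>y\<in>{0..1}. \<bar>AA y\<bar> \<le> A"
proof -
  have "compact (AA ` {0..1})" by (rule compact_continuous_image[OF AA_cont compact_Icc])
  then obtain A where "\<And>z. z \<in> AA ` {0..1} \<Longrightarrow> norm z \<le> A"
    using compact_imp_bounded bounded_iff by metis
  thus ?thesis by auto
qed

lemma phi1_lip: "\<exists>L. \<forall>x. \<bar>x - x0\<bar> \<le> 1 \<longrightarrow> \<bar>phi1 x - phi1 x0\<bar> \<le> L * \<bar>x - x0\<bar>"
proof -
  have "compact (phi2 ` {x0-1..x0+1})" by (rule compact_continuous_image[OF cont_phi2 compact_Icc])
  then obtain L where L: "\<And>z. z \<in> phi2 ` {x0-1..x0+1} \<Longrightarrow> norm z \<le> L"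
    using compact_imp_bounded bounded_iff by metis
  show ?thesis
  proof (intro exI allI impI)
    fix x assume x: "\<bar>x - x0\<bar> \<le> 1"
    show "\<bar>phi1 x - phi1 x0\<bar> \<le> L * \<bar>x - x0\<bar>"
    proof (cases rule: linorder_cases[of x x0])
      case less
      obtain z where z: "x < z" "z < x0" "phi1 x0 - phi1 x = (x0 - x) * phi2 z"
        using MVT2[OF less, of phi1 phi2] phi1_deriv by blast
      have "\<bar>phi2 z\<bar> \<le> L" using L[of "phi2 z"] z x by auto
      hence "\<bar>(x0 - x) * phi2 z\<bar> \<le> (x0 - x) * L" using less by (simp add: abs_mult mult_left_mono)
      thus ?thesis using z less by (simp add: abs_minus_commute mult.commute)
    next
      case greater
      obtain z where z: "x0 < z" "z < x" "phi1 x - phi1 x0 = (x - x0) * phi2 z"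
        using MVT2[OF greater, of phi1 phi2] phi1_deriv by blast
      have "\<bar>phi2 z\<bar> \<le> L" using L[of "phi2 z"] z x by auto
      hence "\<bar>(x - x0) * phi2 z\<bar> \<le> (x - x0) * L" using greater by (simp add: abs_mult mult_left_mono)
      thus ?thesis using z greater by (simp add: mult.commute)
    qed simp
  qed
qed

lemma U1_lip: "\<exists>L. \<forall>x (y::real). y \<in> {0..1} \<longrightarrow> \<bar>x - x0\<bar> \<le> 1 \<longrightarrow> \<bar>U1 x y - U1 x0 y\<bar> \<le> L * \<bar>x - x0\<bar>"
proof -
  obtain A where A: "\<And>y. y \<in> {0..1} \<Longrightarrow> \<bar>AA y\<bar> \<le> A" using AA_bound by blast
  obtain L where L: "\<And>x. \<bar>x - x0\<bar> \<le> 1 \<Longrightarrow> \<bar>phi1 x - phi1 x0\<bar> \<le> L * \<bar>x - x0\<bar>" using phi1_lip by blast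
  show ?thesis
  proof (intro exI allI impI)
    fix x y :: real assume y: "y \<in> {0..1}" and x: "\<bar>x - x0\<bar> \<le> 1"
    have "\<bar>U1 x y - U1 x0 y\<bar> \<le> \<bar>v1 x y - v1 x0 y\<bar>" unfolding U1_def by linarith
    also have "v1 x y - v1 x0 y = - AA y * (phi1 x - phi1 x0)" unfolding v1_def by (simp add: algebra_simps)
    also have "\<bar>- AA y * (phi1 x - phi1 x0)\<bar> = \<bar>AA y\<bar> * \<bar>phi1 x - phi1 x0\<bar>" by (simp add: abs_mult)
    also have "\<dots> \<le> A * (L * \<bar>x - x0\<bar>)"
      by (rule mult_mono) (use A[OF y] L[OF x] in auto)
    finally show "\<bar>U1 x y - U1 x0 y\<bar> \<le> (A * L) * \<bar>x - x0\<bar>" by (simp add: mult.assoc)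
  qed
qed

end

context main begin

definition "Fx x c = (1 - c) - integral {c..1} (\<lambda>y. U1 x y)"
definition "Fxx x c = - integral {c..1} (\<lambda>y. U2 x y)"
definition "Fc x c = - x + UU x c"
abbreviation "FF \<equiv> Ffun \<theta> \<sigma> \<mu> lam \<Phi>"

lemma FF_eq: "FF x c = x * (1 - c) - integral {c..1} (\<lambda>y. UU x y)"
  unfolding Ffun_def ufun_eq by simp

lemma cont_slice: fixes h :: "real \<Rightarrow> real \<Rightarrow> real" assumes "continuous_on DD (\<lambda>p. h (fst p) (snd p))"
  shows "continuous_on {0..1} (\<lambda>y. h x y)"
  by (rule continuous_on_compose2[OF assms, of _ "\<lambda>y. (x, y)", simplified]) (auto intro!: continuous_intros)

lemma int_slice: fixes h :: "real \<Rightarrow> real \<Rightarrow> real" assumes "continuous_on DD (\<lambda>p. h (fst p) (snd p))" "c \<in> {0..1}"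
  shows "(\<lambda>y. h x y) integrable_on {c..1}"
proof -
  have "continuous_on {c..1} (\<lambda>y. h x y)"
    by (rule continuous_on_subset[OF cont_slice[OF assms(1)]]) (use assms(2) in auto)
  thus ?thesis by (rule integrable_continuous_interval)
qed

lemma finN: "finite {y \<in> {0..1}. beta y = x0}"
proof (cases "\<exists>y\<in>{0..1}. beta y = x0")
  case True
  then obtain y0 where y0: "y0 \<in> {0..1}" "beta y0 = x0" by blast
  have "{y \<in> {0..1}. beta y = x0} \<subseteq> {y0}" using beta_inj[OF _ y0(1)] y0(2) by auto
  thus ?thesis using finite_subset by blast
next
  case False
  hence "{y \<in> {0..1}. beta y = x0} = {}" by auto
  thus ?thesis by (metis finite.emptyI)
qed

context fixes cc :: real assumes cc: "cc \<in> {0..1}"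
begin

lemma dFx: "((\<lambda>x. FF x cc) has_real_derivative Fx x0 cc) (at x0)"
proof -
  have L: "((\<lambda>x. integral (cbox cc 1) (\<lambda>y. UU x y)) has_field_derivative integral (cbox cc 1) (\<lambda>y. U1 x0 y)) (at x0 within UNIV)"
  proof (rule leibniz_rule_field_derivative)
    fix x t assume "t \<in> cbox cc (1::real)"
    hence "t \<in> {0..1}" using cc by auto
    thus "((\<lambda>x. UU x t) has_field_derivative U1 x t) (at x within UNIV)" using UU_deriv by simp
  next
    fix x show "(\<lambda>y. UU x y) integrable_on cbox cc 1" using int_slice[OF cUU cc] by simp
  next
    have "continuous_on (UNIV \<times> cbox cc 1) (\<lambda>p. U1 (fst p) (snd p))"
      by (rule continuous_on_subset[OF cU1]) (use cc in auto)
    thus "continuous_on (UNIV \<times> cbox cc 1) (\<lambda>(x, t). U1 x t)" by (simp add: case_prod_beta')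
  qed auto
  have "((\<lambda>x. x * (1 - cc) - integral {cc..1} (\<lambda>y. UU x y)) has_real_derivative 1 * (1 - cc) - integral {cc..1} (\<lambda>y. U1 x0 y)) (at x0)"
    using L by (intro DERIV_diff DERIV_cmult_right DERIV_ident) simp_all
  thus ?thesis unfolding FF_eq[abs_def] Fx_def by simp
qed

lemma dFxx: "(\<lambda>y. U2 x0 y) integrable_on {cc..1} \<and> ((\<lambda>x. Fx x cc) has_real_derivative Fxx x0 cc) (at x0)"
proof -
  obtain L where L: "\<And>x y. y \<in> {0..1} \<Longrightarrow> \<bar>x - x0\<bar> \<le> 1 \<Longrightarrow> \<bar>U1 x y - U1 x0 y\<bar> \<le> L * \<bar>x - x0\<bar>"
    using U1_lip by blast
  have D: "(\<lambda>y. U2 x0 y) integrable_on {cc..1} \<and> ((\<lambda>x. integral {cc..1} (\<lambda>y. U1 x y)) has_real_derivative integral {cc..1} (\<lambda>y. U2 x0 y)) (at x0)"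
  proof (rule DCT_deriv[where N = "{y \<in> {0..1}. beta y = x0}" and L = L])
    show "finite {y \<in> {0..1}. beta y = x0}" by (rule finN)
    fix x show "(\<lambda>y. U1 x y) integrable_on {cc..1}" by (rule int_slice[OF cU1 cc])
  next
    fix y assume "y \<in> {cc..1}" "y \<notin> {y \<in> {0..1}. beta y = x0}"
    hence y: "y \<in> {0..1}" "x0 \<noteq> beta y" using cc by auto
    show "((\<lambda>x. U1 x y) has_real_derivative U2 x0 y) (at x0)" by (rule U1_deriv[OF y])
  next
    fix x y assume "y \<in> {cc..1}" "\<bar>x - x0\<bar> \<le> 1"
    thus "\<bar>U1 x y - U1 x0 y\<bar> \<le> L * \<bar>x - x0\<bar>" using L cc by auto
  qed
  have "((\<lambda>x. (1 - cc) - integral {cc..1} (\<lambda>y. U1 x y)) has_real_derivative 0 - integral {cc..1} (\<lambda>y. U2 x0 y)) (at x0)"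
    using D by (intro DERIV_diff DERIV_const) simp_all
  thus ?thesis using D unfolding Fx_def[abs_def] Fxx_def by simp
qed

lemma dFc: "((\<lambda>d. FF x d) has_real_derivative Fc x cc) (at cc within {0..1})"
proof -
  have c01: "continuous_on {0..1} (\<lambda>y. UU x y)" by (rule cont_slice[OF cUU])
  have I: "((\<lambda>d::real. integral {0..d} (\<lambda>y. UU x y)) has_real_derivative UU x cc) (at cc within {0..1})"
    by (rule integral_has_real_derivative[OF c01 cc])
  have "((\<lambda>d::real. x * (1 - d) - (integral {0..1} (\<lambda>y. UU x y) - integral {0..d} (\<lambda>y. UU x y))) has_real_derivative
        x * (0 - 1) - (0 - UU x cc)) (at cc within {0..1})"
    by (intro DERIV_diff DERIV_cmult DERIV_const DERIV_ident I)
  hence "((\<lambda>d::real. x * (1 - d) - (integral {0..1} (\<lambda>y. UU x y) - integral {0..d} (\<lambda>y. UU x y))) has_real_derivative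
        Fc x cc) (at cc within {0..1})" by (simp add: Fc_def)
  thus ?thesis
  proof (rule has_field_derivative_transform_within[OF _ zero_less_one cc])
    fix d :: real assume d: "d \<in> {0..1}"
    have "integral {0..d} (\<lambda>y. UU x y) + integral {d..1} (\<lambda>y. UU x y) = integral {0..1} (\<lambda>y. UU x y)"
      using Henstock_Kurzweil_Integration.integral_combine[of 0 d 1 "\<lambda>y. UU x y", OF _ _ integrable_continuous_interval[OF c01]] d by simp
    thus "x * (1 - d) - (integral {0..1} (\<lambda>y. UU x y) - integral {0..d} (\<lambda>y. UU x y)) = FF x d"
      unfolding FF_eq by simp
  qed
qed

end

lemma U2_int: "c \<in> {0..1} \<Longrightarrow> (\<lambda>y. U2 x y) integrable_on {c..1}"
  using dFxx by blast

lemma U2_isCont: assumes "y \<in> {0..1}" "x0 \<noteq> beta y" shows "isCont (\<lambda>x. U2 x y) x0"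
proof (cases "x0 < beta y")
  case True
  have "\<forall>\<^sub>F x in at x0. x < beta y" using True by (rule order_tendstoD(2)[OF tendsto_ident_at])
  hence "\<forall>\<^sub>F x in at x0. U2 x y = 0" by eventually_elim (simp add: U2_def)
  moreover have "U2 x0 y = 0" using True by (simp add: U2_def)
  ultimately show ?thesis unfolding isCont_def by (simp add: tendsto_eventually)
next
  case False
  hence g: "x0 > beta y" using assms by simp
  have "\<forall>\<^sub>F x in at x0. beta y < x" using g by (rule order_tendstoD(1)[OF tendsto_ident_at])
  hence ev: "\<forall>\<^sub>F x in at x0. - AA y * phi2 x = U2 x y" by eventually_elim (simp add: U2_def)
  have "((\<lambda>x. - AA y * phi2 x) \<longlongrightarrow> - AA y * phi2 x0) (at x0)"
    using continuous_on_interior[OF cont_phi2[of UNIV]] by (intro tendsto_intros) (simp add: isCont_def)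
  hence "((\<lambda>x. U2 x y) \<longlongrightarrow> - AA y * phi2 x0) (at x0)" by (rule Lim_transform_eventually[OF _ ev])
  thus ?thesis using g by (simp add: isCont_def U2_def)
qed

lemma cFF: "continuous_on DD (\<lambda>(x, c). FF x c)"
proof -
  have "continuous_on DD (\<lambda>p. integral {snd p..1} (\<lambda>y. UU (fst p) y))"
  proof (rule DCT_cont[where N = "\<lambda>_. {}"])
    show "\<And>x c. c \<in> {0..1} \<Longrightarrow> (\<lambda>y. UU x y) integrable_on {c..1}" by (rule int_slice[OF cUU])
    show "\<And>B. \<exists>M. \<forall>x y. \<bar>x\<bar> \<le> B \<longrightarrow> y \<in> {0..1} \<longrightarrow> \<bar>UU x y\<bar> \<le> M" by (rule cont_bound[OF cUU])
    show "\<And>x y. y \<in> {0..1} \<Longrightarrow> y \<notin> {} \<Longrightarrow> isCont (\<lambda>x. UU x y) x"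
      using UU_deriv DERIV_isCont by blast
  qed simp
  hence "continuous_on DD (\<lambda>p. fst p * (1 - snd p) - integral {snd p..1} (\<lambda>y. UU (fst p) y))"
    by (intro continuous_intros)
  thus ?thesis by (simp add: case_prod_beta' FF_eq)
qed

lemma cFx: "continuous_on DD (\<lambda>(x, c). Fx x c)"
proof -
  have "continuous_on DD (\<lambda>p. integral {snd p..1} (\<lambda>y. U1 (fst p) y))"
  proof (rule DCT_cont[where N = "\<lambda>_. {}"])
    show "\<And>x c. c \<in> {0..1} \<Longrightarrow> (\<lambda>y. U1 x y) integrable_on {c..1}" by (rule int_slice[OF cU1])
    show "\<And>B. \<exists>M. \<forall>x y. \<bar>x\<bar> \<le> B \<longrightarrow> y \<in> {0..1} \<longrightarrow> \<bar>U1 x y\<bar> \<le> M" by (rule cont_bound[OF cU1])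
    show "\<And>x y. y \<in> {0..1} \<Longrightarrow> y \<notin> {} \<Longrightarrow> isCont (\<lambda>x. U1 x y) x"
      unfolding U1_def using v1_deriv DERIV_isCont by (intro continuous_intros) blast
  qed simp
  hence "continuous_on DD (\<lambda>p. (1 - snd p) - integral {snd p..1} (\<lambda>y. U1 (fst p) y))"
    by (intro continuous_intros)
  thus ?thesis by (simp add: case_prod_beta' Fx_def)
qed

lemma cFxx: "continuous_on DD (\<lambda>(x, c). Fxx x c)"
proof -
  have "continuous_on DD (\<lambda>p. integral {snd p..1} (\<lambda>y. U2 (fst p) y))"
  proof (rule DCT_cont[where N = "\<lambda>x. {y \<in> {0..1}. beta y = x}"])
    show "\<And>x c. c \<in> {0..1} \<Longrightarrow> (\<lambda>y. U2 x y) integrable_on {c..1}" by (rule U2_int)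
    show "\<And>x. finite {y \<in> {0..1}. beta y = x}" by (rule finN)
    show "\<And>x y. y \<in> {0..1} \<Longrightarrow> y \<notin> {y \<in> {0..1}. beta y = x} \<Longrightarrow> isCont (\<lambda>x. U2 x y) x"
      using U2_isCont by auto
    fix B
    obtain M where M: "\<And>x y. \<bar>x\<bar> \<le> B \<Longrightarrow> y \<in> {0..1} \<Longrightarrow> \<bar>- AA y * phi2 x\<bar> \<le> M"
      using cont_bound[OF cAphi2, of B] by blast
    show "\<exists>M. \<forall>x y. \<bar>x\<bar> \<le> B \<longrightarrow> y \<in> {0..1} \<longrightarrow> \<bar>U2 x y\<bar> \<le> M"
    proof (intro exI allI impI)
      fix x y assume "\<bar>x\<bar> \<le> B" "y \<in> {0..(1::real)}"
      thus "\<bar>U2 x y\<bar> \<le> M" using M[of x y] by (auto simp: U2_def)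
    qed
  qed
  hence "continuous_on DD (\<lambda>p. - integral {snd p..1} (\<lambda>y. U2 (fst p) y))"
    by (intro continuous_intros)
  thus ?thesis by (simp add: case_prod_beta' Fxx_def)
qed

lemma cFc: "continuous_on DD (\<lambda>(x, c). Fc x c)"
proof -
  have "continuous_on DD (\<lambda>p. - fst p + UU (fst p) (snd p))"
    by (intro continuous_intros cUU)
  thus ?thesis by (simp add: case_prod_beta' Fc_def)
qed

end

locale main2 = main +
  assumes Phi1: "\<Phi> 1 = 0"
begin

lemma W_pt: assumes y: "y \<in> {0..1}" and xb: "x > beta y"
  shows "\<sigma>\<^sup>2 / 2 * U2 x y + \<theta> * (\<mu> - x) * U1 x y - lam * UU x y = \<theta> * \<mu> - kk y * x"
proof -
  have u2: "U2 x y = - AA y * phi2 x" using xb by (simp add: U2_def)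
  have u1: "U1 x y = kk y / (lam + \<theta>) - AA y * phi1 x" using xb U1_eq[OF y] by (simp add: v1_def)
  have u0: "UU x y = GG x y - AA y * phi x" using xb by (simp add: UU_def vv_def)
  have ode: "\<sigma>\<^sup>2 / 2 * phi2 x + \<theta> * (\<mu> - x) * phi1 x - lam * phi x = 0" using phi_ode[of x] by simp
  have g: "\<theta> * (\<mu> - x) * (kk y / (lam + \<theta>)) - lam * GG x y = \<theta> * \<mu> - kk y * x"
  proof -
    have nz: "lam + \<theta> \<noteq> 0" using lam th by simp
    define r where "r = lam / (lam + \<theta>)"
    define s where "s = \<theta> / (lam + \<theta>)"
    have rs: "r + s = 1" unfolding r_def s_def using nz by (simp add: add_divide_distrib[symmetric])
    have a1: "\<theta> * (\<mu> - x) * (kk y / (lam + \<theta>)) = s * kk y * (\<mu> - x)" unfolding s_def by simp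
    have a2: "lam * (\<mu> * (kk y - \<theta>) / lam) = \<mu> * (kk y - \<theta>)" using lam by simp
    have a3: "lam * (kk y * (x - \<mu>) / (lam + \<theta>)) = r * kk y * (x - \<mu>)" unfolding r_def by simp
    have "lam * GG x y = \<mu> * (kk y - \<theta>) + r * kk y * (x - \<mu>)"
      unfolding GG_def' distrib_left a2 a3 ..
    hence "\<theta> * (\<mu> - x) * (kk y / (lam + \<theta>)) - lam * GG x y
       = (r + s) * kk y * (\<mu> - x) - \<mu> * (kk y - \<theta>)" unfolding a1 by (simp add: algebra_simps)
    thus ?thesis unfolding rs by (simp add: algebra_simps)
  qed
  have "\<sigma>\<^sup>2 / 2 * U2 x y + \<theta> * (\<mu> - x) * U1 x y - lam * UU x y
     = - AA y * (\<sigma>\<^sup>2 / 2 * phi2 x + \<theta> * (\<mu> - x) * phi1 x - lam * phi x)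
       + (\<theta> * (\<mu> - x) * (kk y / (lam + \<theta>)) - lam * GG x y)"
    unfolding u2 u1 u0 by (simp add: algebra_simps)
  also have "\<dots> = \<theta> * \<mu> - kk y * x" unfolding ode g by simp
  finally show ?thesis .
qed

lemma eqn:
  assumes cc: "cc \<in> {0..1}"
  shows "max (- (\<sigma>\<^sup>2 / 2 * Fxx x cc + \<theta> * (\<mu> - x) * Fx x cc) + lam * FF x cc - lam * x * \<Phi> cc)
             (- Fc x cc - x) = 0"
proof -
  define I0 where "I0 = integral {cc..1} (\<lambda>y. UU x y)"
  define I1 where "I1 = integral {cc..1} (\<lambda>y. U1 x y)"
  define I2 where "I2 = integral {cc..1} (\<lambda>y. U2 x y)"
  define W where "W y = \<sigma>\<^sup>2 / 2 * U2 x y + \<theta> * (\<mu> - x) * U1 x y - lam * UU x y" for y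
  define Q where "Q y = kk y * x - \<theta> * \<mu>" for y
  define R where "R y = (if x > beta y then 0 else Q y)" for y
  have i0: "(\<lambda>y. UU x y) integrable_on {cc..1}" by (rule int_slice[OF cUU cc])
  have i1: "(\<lambda>y. U1 x y) integrable_on {cc..1}" by (rule int_slice[OF cU1 cc])
  have i2: "(\<lambda>y. U2 x y) integrable_on {cc..1}" by (rule U2_int[OF cc])
  have j2: "(\<lambda>y. \<sigma>\<^sup>2 / 2 * U2 x y) integrable_on {cc..1}" by (rule integrable_on_mult_right[OF i2])
  have j1: "(\<lambda>y. \<theta> * (\<mu> - x) * U1 x y) integrable_on {cc..1}" by (rule integrable_on_mult_right[OF i1])
  have j0: "(\<lambda>y. lam * UU x y) integrable_on {cc..1}" by (rule integrable_on_mult_right[OF i0])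
  have iW: "W integrable_on {cc..1}"
    unfolding W_def by (rule integrable_diff[OF integrable_add[OF j2 j1] j0])
  have intW: "integral {cc..1} W = \<sigma>\<^sup>2 / 2 * I2 + \<theta> * (\<mu> - x) * I1 - lam * I0"
  proof -
    show ?thesis unfolding W_def I0_def I1_def I2_def
      integral_diff[OF integrable_add[OF j2 j1] j0] integral_add[OF j2 j1] integral_mult_right by simp
  qed
  have dPi: "dP integrable_on {cc..1}"
    by (rule integrable_continuous_interval[OF dP_cont_on])
  have Qeq: "Q = (\<lambda>y. (x * (lam + \<theta>) - \<theta> * \<mu>) + (x * lam) * dP y)"
    unfolding Q_def kk_def' by (simp add: fun_eq_iff algebra_simps)
  have iQ: "Q integrable_on {cc..1}"
    unfolding Qeq by (intro integrable_add integrable_const_ivl integrable_on_mult_right dPi)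
  have intQ: "integral {cc..1} Q = (1 - cc) * ((lam + \<theta>) * x - \<theta> * \<mu>) - lam * x * \<Phi> cc"
  proof -
    have "integral {cc..1} Q = (1 - cc) * (x * (lam + \<theta>) - \<theta> * \<mu>) + (x * lam) * (\<Phi> 1 - \<Phi> cc)"
      unfolding Qeq using cc
      by (simp add: integral_add integrable_const_ivl integrable_on_mult_right dPi Phi_integral)
    thus ?thesis using Phi1 by (simp add: algebra_simps)
  qed
  have RWQ: "R y = W y + Q y" if y: "y \<in> {cc..1}" for y
  proof -
    have y01: "y \<in> {0..1}" using y cc by auto
    show ?thesis
    proof (cases "x > beta y")
      case True thus ?thesis using W_pt[OF y01 True] by (simp add: R_def W_def Q_def)
    next
      case False thus ?thesis by (simp add: R_def W_def Q_def U2_def U1_eq[OF y01] UU_def)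
    qed
  qed
  have iR: "R integrable_on {cc..1}"
    by (rule integrable_eq[OF integrable_add[OF iW iQ]]) (use RWQ in simp)
  have intR: "integral {cc..1} R = integral {cc..1} W + integral {cc..1} Q"
    using integral_cong[of "{cc..1}" R "\<lambda>y. W y + Q y"] RWQ integral_add[OF iW iQ] by simp
  have E1: "- (\<sigma>\<^sup>2 / 2 * Fxx x cc + \<theta> * (\<mu> - x) * Fx x cc) + lam * FF x cc - lam * x * \<Phi> cc
      = integral {cc..1} R"
    unfolding intR intW intQ Fxx_def Fx_def FF_eq I0_def[symmetric] I1_def[symmetric] I2_def[symmetric]
    by (simp add: algebra_simps)
  show ?thesis
  proof (cases "x > beta cc")
    case True
    have "R y = 0" if "y \<in> {cc..1}" for y
    proof -
      have "beta y \<le> beta cc" using beta_mono[OF cc _, of y] that cc by auto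
      thus ?thesis using True by (simp add: R_def)
    qed
    hence "integral {cc..1} R = 0" using integral_cong[of "{cc..1}" R "\<lambda>_. 0"] by simp
    moreover have "- Fc x cc - x < 0"
      using vv_pos[OF cc True] True by (simp add: Fc_def UU_def)
    ultimately show ?thesis unfolding E1 by simp
  next
    case False
    have "R y \<le> 0" if y: "y \<in> {cc..1}" for y
    proof (cases "x > beta y")
      case True thus ?thesis by (simp add: R_def)
    next
      case False
      have y01: "y \<in> {0..1}" using y cc by auto
      have kp: "kk y > 0" by (rule kpos01[OF y01])
      have "kk y * x \<le> \<theta> * \<mu>"
      proof (cases "x \<le> 0")
        case True
        hence "kk y * x \<le> 0" using kp by (simp add: mult_nonneg_nonpos less_imp_le)
        thus ?thesis using th mu by (smt (verit) mult_pos_pos)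
      next
        case xpos: False
        have "kk y * x \<le> kk y * beta y" using False kp by (intro mult_left_mono) auto
        thus ?thesis using k_beta[OF kp] by simp
      qed
      thus ?thesis using False by (simp add: R_def Q_def)
    qed
    hence "integral {cc..1} R \<le> integral {cc..1} (\<lambda>_. 0)"
      by (intro integral_le iR) auto
    hence "integral {cc..1} R \<le> 0" by simp
    moreover have "- Fc x cc - x = 0" using False by (simp add: Fc_def UU_def)
    ultimately show ?thesis unfolding E1 by simp
  qed
qed

end


theorem mainTheorem6:
  fixes \<theta> \<sigma> \<mu> lam :: real and \<Phi> :: "real \<Rightarrow> real"
  assumes params: "\<theta> > 0" "\<sigma> > 0" "\<mu> > 0" "lam > 0"
    and Phi_C2: "\<forall>x. \<Phi> differentiable at x" "\<forall>x. deriv \<Phi> differentiable at x"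
                "continuous_on UNIV (deriv (deriv \<Phi>))"
    and Phi_noninc: "antimono \<Phi>"
    and Phi_sconv: "strictly_convex \<Phi>"
    and Phi_1: "\<Phi> 1 = 0"
    and k_pos: "\<forall>c\<in>{0..1}. kfun \<theta> lam \<Phi> c > 0"
  shows "\<exists>Fx Fxx Fc :: real \<Rightarrow> real \<Rightarrow> real.
     continuous_on (UNIV \<times> {0..1}) (\<lambda>(x, c). Ffun \<theta> \<sigma> \<mu> lam \<Phi> x c) \<and>
     continuous_on (UNIV \<times> {0..1}) (\<lambda>(x, c). Fx x c) \<and>
     continuous_on (UNIV \<times> {0..1}) (\<lambda>(x, c). Fxx x c) \<and>
     continuous_on (UNIV \<times> {0..1}) (\<lambda>(x, c). Fc x c) \<and>
     (\<forall>x. \<forall>c\<in>{0..1}.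
        ((\<lambda>y. Ffun \<theta> \<sigma> \<mu> lam \<Phi> y c) has_real_derivative Fx x c) (at x) \<and>
        ((\<lambda>y. Fx y c) has_real_derivative Fxx x c) (at x) \<and>
        ((\<lambda>d. Ffun \<theta> \<sigma> \<mu> lam \<Phi> x d) has_real_derivative Fc x c) (at c within {0..1}) \<and>
        max (- (\<sigma>\<^sup>2 / 2 * Fxx x c + \<theta> * (\<mu> - x) * Fx x c)
               + lam * Ffun \<theta> \<sigma> \<mu> lam \<Phi> x c - lam * x * \<Phi> c)
            (- Fc x c - x) = 0)"
proof -
  interpret M: main2 \<theta> \<sigma> \<mu> lam \<Phi>
    by unfold_locales (use params Phi_C2 Phi_sconv Phi_1 k_pos in auto)
  show ?thesis
  proof (rule exI[of _ M.Fx], rule exI[of _ M.Fxx], rule exI[of _ M.Fc], intro conjI allI ballI)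
    show "continuous_on (UNIV \<times> {0..1}) (\<lambda>(x, c). Ffun \<theta> \<sigma> \<mu> lam \<Phi> x c)" by (rule M.cFF)
    show "continuous_on (UNIV \<times> {0..1}) (\<lambda>(x, c). M.Fx x c)" by (rule M.cFx)
    show "continuous_on (UNIV \<times> {0..1}) (\<lambda>(x, c). M.Fxx x c)" by (rule M.cFxx)
    show "continuous_on (UNIV \<times> {0..1}) (\<lambda>(x, c). M.Fc x c)" by (rule M.cFc)
  next
    fix x c :: real assume c: "c \<in> {0..1}"
    show "((\<lambda>y. Ffun \<theta> \<sigma> \<mu> lam \<Phi> y c) has_real_derivative M.Fx x c) (at x)" by (rule M.dFx[OF c])
    show "((\<lambda>y. M.Fx y c) has_real_derivative M.Fxx x c) (at x)" using M.dFxx[OF c] by blast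
    show "((\<lambda>d. Ffun \<theta> \<sigma> \<mu> lam \<Phi> x d) has_real_derivative M.Fc x c) (at c within {0..1})" by (rule M.dFc[OF c])
    show "max (- (\<sigma>\<^sup>2 / 2 * M.Fxx x c + \<theta> * (\<mu> - x) * M.Fx x c) + lam * Ffun \<theta> \<sigma> \<mu> lam \<Phi> x c - lam * x * \<Phi> c)
            (- M.Fc x c - x) = 0" by (rule M.eqn[OF c])
  qed
qed

end
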